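(* Let $\mathcal{C}$ be a pre-Hilbert $*$-category and $\mathrm{Con}(\mathcal{C})$ its wide subcategory of contractions. (i) Every split monomorphism in $\mathrm{Con}(\mathcal{C})$ is isometric. (ii) The inclusion functor $\mathrm{Con}(\mathcal{C})\hookrightarrow\mathcal{C}$ preserves jointly monic wide spans. (iii) The inclusion functor $\mathrm{Con}(\mathcal{C})\hookrightarrow\mathcal{C}$ creates isometric equalisers; in particular, in $\mathrm{Con}(\mathcal{C})$ every parallel pair of morphisms has an isometric equaliser. (iv) In $\mathrm{Con}(\mathcal{C})$, every equaliser is isometric.
   Context: A $*$-category is a category with a choice of $f^*\colon Y\to X$ for each $f\colon X\to Y$ such that $1^*=1$, $(gf)^*=f^*g^*$, $(f^* )^*=f$; $f$ is an isometry if $f^*f=1$. A pre-Hilbert $*$-category is a $*$-category with (R1) a zero object, (R2) orthonormal biproducts of all pairs of objects (biproducts $(X,s_1,r_1,s_2,r_2)$ with $r_k=s_k^*$), (R3) an isometric kernel for every morphism, and (R4) every diagonal $\Delta\colon X\to X\oplus X$ a kernel of some morphism; such a category is additive. For Hermitian endomorphisms $a,b$ of $A$, $a\le b$ means $b-a=y^*y$ for some $y\colon A\to Y$. A contraction is a morphism $f$ with $f^*f\leq 1$; contractions contain all identities and are closed under composition and $*$, forming the wide $*$-subcategory $\mathrm{Con}(\mathcal{C})$. A wide span $(g_\alpha\colon Y\to Z_\alpha)_{\alpha\in I}$ is jointly monic if $g_\alpha h_1=g_\alpha h_2$ for all $\alpha$ implies $h_1=h_2$. "Creates isometric equalisers"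 here means: for any parallel pair of contractions, an isometric equaliser of it in $\mathcal{C}$ is a morphism of $\mathrm{Con}(\mathcal{C})$ and is an equaliser of the pair in $\mathrm{Con}(\mathcal{C})$. *)

theory Defs
  imports Main
begin

record ('o, 'm) starcat =
  Ob  :: "'o set"
  Arr :: "'m set"
  Dom :: "'m \<Rightarrow> 'o"
  Cod :: "'m \<Rightarrow> 'o"
  Cmp :: "'m \<Rightarrow> 'm \<Rightarrow> 'm"   (* Cmp C g f = g \<circ> f  (first f, then g) *)
  Idt :: "'o \<Rightarrow> 'm"
  Star :: "'m \<Rightarrow> 'm"

definition hom :: "('o, 'm) starcat \<Rightarrow> 'o \<Rightarrow> 'o \<Rightarrow> 'm set" where
  "hom C X Y = {f \<in> Arr C. Dom C f = X \<and> Cod C f = Y}"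

definition star_category :: "('o, 'm) starcat \<Rightarrow> bool" where
  "star_category C \<longleftrightarrow>
     (\<forall>f \<in> Arr C. Dom C f \<in> Ob C \<and> Cod C f \<in> Ob C) \<and>
     (\<forall>X \<in> Ob C. Idt C X \<in> hom C X X) \<and>
     (\<forall>X Y Z f g. f \<in> hom C X Y \<longrightarrow> g \<in> hom C Y Z \<longrightarrow> Cmp C g f \<in> hom C X Z) \<and>
     (\<forall>f \<in> Arr C. Cmp C f (Idt C (Dom C f)) = f \<and> Cmp C (Idt C (Cod C f)) f = f) \<and>
     (\<forall>f g h. f \<in> Arr C \<longrightarrow> g \<in> Arr C \<longrightarrow> h \<in> Arr C \<longrightarrow>
        Cod C f = Dom C g \<longrightarrow> Cod C g = Dom C h \<longrightarrow>
        Cmp C h (Cmp C g f) = Cmp C (Cmp C h g) f) \<and>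
     (\<forall>X Y f. f \<in> hom C X Y \<longrightarrow> Star C f \<in> hom C Y X) \<and>
     (\<forall>X \<in> Ob C. Star C (Idt C X) = Idt C X) \<and>
     (\<forall>f g. f \<in> Arr C \<longrightarrow> g \<in> Arr C \<longrightarrow> Cod C f = Dom C g \<longrightarrow>
        Star C (Cmp C g f) = Cmp C (Star C f) (Star C g)) \<and>
     (\<forall>f \<in> Arr C. Star C (Star C f) = f)"

definition isometry :: "('o, 'm) starcat \<Rightarrow> 'm \<Rightarrow> bool" where
  "isometry C f \<longleftrightarrow> f \<in> Arr C \<and> Cmp C (Star C f) f = Idt C (Dom C f)"

definition zero_object :: "('o, 'm) starcat \<Rightarrow> 'o \<Rightarrow> bool" where
  "zero_object C Z \<longleftrightarrow> Z \<in> Ob C \<and>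
     (\<forall>X \<in> Ob C. (\<exists>!f. f \<in> hom C Z X) \<and> (\<exists>!f. f \<in> hom C X Z))"

definition zero_arr :: "('o, 'm) starcat \<Rightarrow> 'm \<Rightarrow> bool" where
  "zero_arr C f \<longleftrightarrow> f \<in> Arr C \<and>
     (\<exists>Z u v. zero_object C Z \<and> u \<in> hom C (Dom C f) Z \<and> v \<in> hom C Z (Cod C f)
              \<and> f = Cmp C v u)"

definition is_product :: "('o, 'm) starcat \<Rightarrow> 'o \<Rightarrow> 'o \<Rightarrow> 'o \<Rightarrow> 'm \<Rightarrow> 'm \<Rightarrow> bool" where
  "is_product C X1 X2 P p1 p2 \<longleftrightarrow> p1 \<in> hom C P X1 \<and> p2 \<in> hom C P X2 \<and>
     (\<forall>W f1 f2. f1 \<in> hom C W X1 \<longrightarrow> f2 \<in> hom C W X2 \<longrightarrow>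
        (\<exists>!u. u \<in> hom C W P \<and> Cmp C p1 u = f1 \<and> Cmp C p2 u = f2))"

definition is_coproduct :: "('o, 'm) starcat \<Rightarrow> 'o \<Rightarrow> 'o \<Rightarrow> 'o \<Rightarrow> 'm \<Rightarrow> 'm \<Rightarrow> bool" where
  "is_coproduct C X1 X2 P i1 i2 \<longleftrightarrow> i1 \<in> hom C X1 P \<and> i2 \<in> hom C X2 P \<and>
     (\<forall>W f1 f2. f1 \<in> hom C X1 W \<longrightarrow> f2 \<in> hom C X2 W \<longrightarrow>
        (\<exists>!u. u \<in> hom C P W \<and> Cmp C u i1 = f1 \<and> Cmp C u i2 = f2))"

definition biproduct ::
  "('o, 'm) starcat \<Rightarrow> 'o \<Rightarrow> 'o \<Rightarrow> 'o \<Rightarrow> 'm \<Rightarrow> 'm \<Rightarrow> 'm \<Rightarrow> 'm \<Rightarrow> bool" where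
  "biproduct C X1 X2 X s1 r1 s2 r2 \<longleftrightarrow>
     s1 \<in> hom C X1 X \<and> r1 \<in> hom C X X1 \<and> s2 \<in> hom C X2 X \<and> r2 \<in> hom C X X2 \<and>
     Cmp C r1 s1 = Idt C X1 \<and> Cmp C r2 s2 = Idt C X2 \<and>
     zero_arr C (Cmp C r2 s1) \<and> zero_arr C (Cmp C r1 s2) \<and>
     is_product C X1 X2 X r1 r2 \<and> is_coproduct C X1 X2 X s1 s2"

definition orthonormal_biproduct ::
  "('o, 'm) starcat \<Rightarrow> 'o \<Rightarrow> 'o \<Rightarrow> 'o \<Rightarrow> 'm \<Rightarrow> 'm \<Rightarrow> 'm \<Rightarrow> 'm \<Rightarrow> bool" where
  "orthonormal_biproduct C X1 X2 X s1 r1 s2 r2 \<longleftrightarrow>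
     biproduct C X1 X2 X s1 r1 s2 r2 \<and> r1 = Star C s1 \<and> r2 = Star C s2"

definition kernel :: "('o, 'm) starcat \<Rightarrow> 'm \<Rightarrow> 'm \<Rightarrow> bool" where
  "kernel C f k \<longleftrightarrow> f \<in> Arr C \<and> k \<in> Arr C \<and> Cod C k = Dom C f \<and>
     zero_arr C (Cmp C f k) \<and>
     (\<forall>h \<in> Arr C. Cod C h = Dom C f \<longrightarrow> zero_arr C (Cmp C f h) \<longrightarrow>
        (\<exists>!u. u \<in> hom C (Dom C h) (Dom C k) \<and> Cmp C k u = h))"

definition pre_hilbert :: "('o, 'm) starcat \<Rightarrow> bool" where
  "pre_hilbert C \<longleftrightarrow> star_category C \<and>
     (\<exists>Z. zero_object C Z) \<and>
     (\<forall>X1 \<in> Ob C. \<forall>X2 \<in> Ob C. \<exists>X s1 r1 s2 r2. orthonormal_biproduct C X1 X2 X s1 r1 s2 r2) \<and>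
     (\<forall>f \<in> Arr C. \<exists>k. kernel C f k \<and> isometry C k) \<and>
     (\<forall>X \<in> Ob C. \<forall>Z s1 r1 s2 r2 d.
        orthonormal_biproduct C X X Z s1 r1 s2 r2 \<and> d \<in> hom C X Z \<and>
        Cmp C r1 d = Idt C X \<and> Cmp C r2 d = Idt C X
        \<longrightarrow> (\<exists>f. kernel C f d))"

text \<open>\<open>h = f + g\<close>, with the addition of the (semi)additive structure induced by
  biproducts: \<open>f + g = \<nabla> \<circ> \<langle>f, g\<rangle>\<close>.\<close>
definition arr_sum :: "('o, 'm) starcat \<Rightarrow> 'm \<Rightarrow> 'm \<Rightarrow> 'm \<Rightarrow> bool" where
  "arr_sum C f g h \<longleftrightarrow> (\<exists>A B. f \<in> hom C A B \<and> g \<in> hom C A B \<and> h \<in> hom C A B \<and>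
     (\<exists>Z s1 r1 s2 r2 u v. biproduct C B B Z s1 r1 s2 r2 \<and>
        u \<in> hom C A Z \<and> Cmp C r1 u = f \<and> Cmp C r2 u = g \<and>
        v \<in> hom C Z B \<and> Cmp C v s1 = Idt C B \<and> Cmp C v s2 = Idt C B \<and>
        h = Cmp C v u))"

definition hermitian :: "('o, 'm) starcat \<Rightarrow> 'm \<Rightarrow> bool" where
  "hermitian C a \<longleftrightarrow> a \<in> Arr C \<and> Dom C a = Cod C a \<and> Star C a = a"

text \<open>\<open>a \<le> b\<close> iff \<open>b - a = y\<^sup>* y\<close> for some \<open>y\<close>, i.e. \<open>b = a + y\<^sup>* y\<close>.\<close>
definition herm_le :: "('o, 'm) starcat \<Rightarrow> 'm \<Rightarrow> 'm \<Rightarrow> bool" where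
  "herm_le C a b \<longleftrightarrow> hermitian C a \<and> hermitian C b \<and> Dom C a = Dom C b \<and>
     (\<exists>y. y \<in> Arr C \<and> Dom C y = Dom C a \<and> arr_sum C a (Cmp C (Star C y) y) b)"

definition contraction :: "('o, 'm) starcat \<Rightarrow> 'm \<Rightarrow> bool" where
  "contraction C f \<longleftrightarrow> f \<in> Arr C \<and> herm_le C (Cmp C (Star C f) f) (Idt C (Dom C f))"

definition Con :: "('o, 'm) starcat \<Rightarrow> 'm set" where
  "Con C = {f. contraction C f}"

definition split_mono_in :: "('o, 'm) starcat \<Rightarrow> 'm set \<Rightarrow> 'm \<Rightarrow> bool" where
  "split_mono_in C M f \<longleftrightarrow> f \<in> M \<and>
     (\<exists>g \<in> M. Dom C g = Cod C f \<and> Cod C g = Dom C f \<and> Cmp C g f = Idt C (Dom C f))"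

definition jointly_monic_in ::
  "('o, 'm) starcat \<Rightarrow> 'm set \<Rightarrow> 'i set \<Rightarrow> 'o \<Rightarrow> ('i \<Rightarrow> 'm) \<Rightarrow> bool" where
  "jointly_monic_in C M I Y g \<longleftrightarrow> Y \<in> Ob C \<and> (\<forall>\<alpha> \<in> I. g \<alpha> \<in> M \<and> Dom C (g \<alpha>) = Y) \<and>
     (\<forall>h1 \<in> M. \<forall>h2 \<in> M. Cod C h1 = Y \<longrightarrow> Cod C h2 = Y \<longrightarrow> Dom C h1 = Dom C h2 \<longrightarrow>
        (\<forall>\<alpha> \<in> I. Cmp C (g \<alpha>) h1 = Cmp C (g \<alpha>) h2) \<longrightarrow> h1 = h2)"

definition equaliser_in :: "('o, 'm) starcat \<Rightarrow> 'm set \<Rightarrow> 'm \<Rightarrow> 'm \<Rightarrow> 'm \<Rightarrow> bool" where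
  "equaliser_in C M f g e \<longleftrightarrow> f \<in> M \<and> g \<in> M \<and> Dom C f = Dom C g \<and> Cod C f = Cod C g \<and>
     e \<in> M \<and> Cod C e = Dom C f \<and> Cmp C f e = Cmp C g e \<and>
     (\<forall>h \<in> M. Cod C h = Dom C f \<longrightarrow> Cmp C f h = Cmp C g h \<longrightarrow>
        (\<exists>!u. u \<in> M \<and> Dom C u = Dom C h \<and> Cod C u = Dom C e \<and> Cmp C e u = h))"

end

theory Submission
  imports Defs
begin

locale ph =
  fixes C :: "('o,'m) starcat"
  assumes PH: "pre_hilbert C"
begin

abbreviation cmp (infixr "\<cdot>" 55) where "g \<cdot> f \<equiv> Cmp C g f"
abbreviation st where "st f \<equiv> Star C f"

lemma SC: "star_category C" using PH by (simp add: pre_hilbert_def)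

lemma PH_zero: "\<exists>Z. zero_object C Z"
  using PH unfolding pre_hilbert_def by (elim conjE) assumption
lemma obip_ex: "X1 \<in> Ob C \<Longrightarrow> X2 \<in> Ob C \<Longrightarrow> \<exists>X s1 r1 s2 r2. orthonormal_biproduct C X1 X2 X s1 r1 s2 r2"
proof -
  assume a: "X1 \<in> Ob C" "X2 \<in> Ob C"
  have "\<forall>X1 \<in> Ob C. \<forall>X2 \<in> Ob C. \<exists>X s1 r1 s2 r2. orthonormal_biproduct C X1 X2 X s1 r1 s2 r2"
    using PH unfolding pre_hilbert_def by (elim conjE) assumption
  then show ?thesis using a by blast
qed
lemma PH_ker: "f \<in> Arr C \<Longrightarrow> \<exists>k. kernel C f k \<and> isometry C k"
proof -
  assume a: "f \<in> Arr C"
  have "\<forall>f \<in> Arr C. \<exists>k. kernel C f k \<and> isometry C k"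
    using PH unfolding pre_hilbert_def by (elim conjE) assumption
  then show ?thesis using a by blast
qed
lemma PH_diag: "X \<in> Ob C \<Longrightarrow> orthonormal_biproduct C X X Z s1 r1 s2 r2 \<Longrightarrow> d \<in> hom C X Z \<Longrightarrow>
        Cmp C r1 d = Idt C X \<Longrightarrow> Cmp C r2 d = Idt C X \<Longrightarrow> \<exists>f. kernel C f d"
proof -
  assume a: "X \<in> Ob C" "orthonormal_biproduct C X X Z s1 r1 s2 r2" "d \<in> hom C X Z"
        "Cmp C r1 d = Idt C X" "Cmp C r2 d = Idt C X"
  have "\<forall>X \<in> Ob C. \<forall>Z s1 r1 s2 r2 d.
        orthonormal_biproduct C X X Z s1 r1 s2 r2 \<and> d \<in> hom C X Z \<and>
        Cmp C r1 d = Idt C X \<and> Cmp C r2 d = Idt C X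
        \<longrightarrow> (\<exists>f. kernel C f d)"
    using PH unfolding pre_hilbert_def by (elim conjE) assumption
  then show ?thesis using a by blast
qed

lemma dom_ob[simp]: "f \<in> Arr C \<Longrightarrow> Dom C f \<in> Ob C"
  using SC unfolding star_category_def by blast
lemma cod_ob[simp]: "f \<in> Arr C \<Longrightarrow> Cod C f \<in> Ob C"
  using SC unfolding star_category_def by blast

lemma comp_hom: "f \<in> Arr C \<Longrightarrow> g \<in> Arr C \<Longrightarrow> Cod C f = Dom C g \<Longrightarrow> g \<cdot> f \<in> hom C (Dom C f) (Cod C g)"
proof -
  assume a: "f \<in> Arr C" "g \<in> Arr C" "Cod C f = Dom C g"
  have "f \<in> hom C (Dom C f) (Cod C f)" "g \<in> hom C (Cod C f) (Cod C g)" using a by (auto simp: hom_def)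
  then show ?thesis using SC unfolding star_category_def by blast
qed

lemma comp_arr[simp]: "f \<in> Arr C \<Longrightarrow> g \<in> Arr C \<Longrightarrow> Cod C f = Dom C g \<Longrightarrow> g \<cdot> f \<in> Arr C"
  using comp_hom by (auto simp: hom_def)
lemma dom_comp[simp]: "f \<in> Arr C \<Longrightarrow> g \<in> Arr C \<Longrightarrow> Cod C f = Dom C g \<Longrightarrow> Dom C (g \<cdot> f) = Dom C f"
  using comp_hom by (auto simp: hom_def)
lemma cod_comp[simp]: "f \<in> Arr C \<Longrightarrow> g \<in> Arr C \<Longrightarrow> Cod C f = Dom C g \<Longrightarrow> Cod C (g \<cdot> f) = Cod C g"
  using comp_hom by (auto simp: hom_def)

lemma assoc[simp]: "f \<in> Arr C \<Longrightarrow> g \<in> Arr C \<Longrightarrow> h \<in> Arr C \<Longrightarrow> Cod C f = Dom C g \<Longrightarrow> Cod C g = Dom C h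
  \<Longrightarrow> (h \<cdot> g) \<cdot> f = h \<cdot> (g \<cdot> f)"
  using SC unfolding star_category_def by metis

lemma id_arr[simp]: "X \<in> Ob C \<Longrightarrow> Idt C X \<in> Arr C"
  using SC unfolding star_category_def hom_def by blast
lemma id_dom[simp]: "X \<in> Ob C \<Longrightarrow> Dom C (Idt C X) = X"
  using SC unfolding star_category_def hom_def by blast
lemma id_cod[simp]: "X \<in> Ob C \<Longrightarrow> Cod C (Idt C X) = X"
  using SC unfolding star_category_def hom_def by blast
lemma comp_id[simp]: "f \<in> Arr C \<Longrightarrow> Dom C f = X \<Longrightarrow> f \<cdot> Idt C X = f"
  using SC unfolding star_category_def by blast
lemma id_comp[simp]: "f \<in> Arr C \<Longrightarrow> Cod C f = X \<Longrightarrow> Idt C X \<cdot> f = f"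
  using SC unfolding star_category_def by blast

lemma st_hom: "f \<in> Arr C \<Longrightarrow> st f \<in> hom C (Cod C f) (Dom C f)"
  using SC unfolding star_category_def hom_def by blast
lemma st_arr[simp]: "f \<in> Arr C \<Longrightarrow> st f \<in> Arr C" using st_hom by (auto simp: hom_def)
lemma st_dom[simp]: "f \<in> Arr C \<Longrightarrow> Dom C (st f) = Cod C f" using st_hom by (auto simp: hom_def)
lemma st_cod[simp]: "f \<in> Arr C \<Longrightarrow> Cod C (st f) = Dom C f" using st_hom by (auto simp: hom_def)
lemma st_st[simp]: "f \<in> Arr C \<Longrightarrow> st (st f) = f"
  using SC unfolding star_category_def by blast
lemma st_id[simp]: "X \<in> Ob C \<Longrightarrow> st (Idt C X) = Idt C X"
  using SC unfolding star_category_def by blast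
lemma st_comp[simp]: "f \<in> Arr C \<Longrightarrow> g \<in> Arr C \<Longrightarrow> Cod C f = Dom C g \<Longrightarrow> st (g \<cdot> f) = st f \<cdot> st g"
  using SC unfolding star_category_def by blast

lemma hom_iff[simp]: "f \<in> hom C A B \<longleftrightarrow> f \<in> Arr C \<and> Dom C f = A \<and> Cod C f = B"
  by (simp add: hom_def)


lemma reassoc: "g \<cdot> f = h \<Longrightarrow> f \<in> Arr C \<Longrightarrow> g \<in> Arr C \<Longrightarrow> x \<in> Arr C \<Longrightarrow> Cod C x = Dom C f \<Longrightarrow> Cod C f = Dom C g
  \<Longrightarrow> g \<cdot> (f \<cdot> x) = h \<cdot> x"
  using assoc[of x f g] by simp

section \<open>Zero arrows\<close>

lemma zero_ob: "zero_object C Z \<Longrightarrow> Z \<in> Ob C" by (simp add: zero_object_def)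

lemma zero_from_uniq: "zero_object C Z \<Longrightarrow> X \<in> Ob C \<Longrightarrow> a \<in> hom C Z X \<Longrightarrow> b \<in> hom C Z X \<Longrightarrow> a = b"
  unfolding zero_object_def by blast
lemma zero_to_uniq: "zero_object C Z \<Longrightarrow> X \<in> Ob C \<Longrightarrow> a \<in> hom C X Z \<Longrightarrow> b \<in> hom C X Z \<Longrightarrow> a = b"
  unfolding zero_object_def by blast
lemma zero_from_ex: "zero_object C Z \<Longrightarrow> X \<in> Ob C \<Longrightarrow> \<exists>a. a \<in> hom C Z X"
  unfolding zero_object_def by blast
lemma zero_to_ex: "zero_object C Z \<Longrightarrow> X \<in> Ob C \<Longrightarrow> \<exists>a. a \<in> hom C X Z"
  unfolding zero_object_def by blast

lemma zero_unique:
  assumes "zero_arr C f" "zero_arr C g" "Dom C f = Dom C g" "Cod C f = Cod C g"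
  shows "f = g"
proof -
  obtain Z u v where Z: "zero_object C Z" "u \<in> hom C (Dom C f) Z" "v \<in> hom C Z (Cod C f)" "f = v \<cdot> u"
    using assms(1) unfolding zero_arr_def by blast
  obtain Z' u' v' where Z': "zero_object C Z'" "u' \<in> hom C (Dom C g) Z'" "v' \<in> hom C Z' (Cod C g)" "g = v' \<cdot> u'"
    using assms(2) unfolding zero_arr_def by blast
  obtain t where t: "t \<in> hom C Z Z'" using zero_from_ex[OF Z(1) zero_ob[OF Z'(1)]] by blast
  have ar: "u \<in> Arr C" "v \<in> Arr C" "t \<in> Arr C" "u' \<in> Arr C" "v' \<in> Arr C"
    and dc: "Dom C u = Dom C f" "Cod C u = Z" "Dom C v = Z" "Cod C v = Cod C f" "Dom C t = Z" "Cod C t = Z'"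
       "Dom C u' = Dom C f" "Cod C u' = Z'" "Dom C v' = Z'" "Cod C v' = Cod C f"
    using Z(1-3) Z'(1-3) t assms(3,4) by auto
  have 1: "u' = t \<cdot> u"
    by (rule zero_to_uniq[OF Z'(1), of "Dom C f"]) (use ar dc dom_ob[OF ar(1)] cod_ob[OF ar(2)] in auto)
  have 2: "v = v' \<cdot> t"
    by (rule zero_from_uniq[OF Z(1), of "Cod C f"]) (use ar dc dom_ob[OF ar(1)] cod_ob[OF ar(2)] in auto)
  have "f = (v' \<cdot> t) \<cdot> u" by (simp only: Z(4) 2)
  also have "\<dots> = v' \<cdot> (t \<cdot> u)" by (rule assoc) (use ar dc in simp_all)
  also have "\<dots> = g" by (simp only: Z'(4) 1)
  finally show ?thesis .
qed

lemma zero_exists: "A \<in> Ob C \<Longrightarrow> B \<in> Ob C \<Longrightarrow> \<exists>f. f \<in> hom C A B \<and> zero_arr C f"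
proof -
  assume AB: "A \<in> Ob C" "B \<in> Ob C"
  obtain Z where Z: "zero_object C Z" using PH_zero by blast
  obtain u where u: "u \<in> hom C A Z" using zero_to_ex[OF Z AB(1)] by blast
  obtain v where v: "v \<in> hom C Z B" using zero_from_ex[OF Z AB(2)] by blast
  have "v \<cdot> u \<in> hom C A B" using u v by auto
  moreover have "zero_arr C (v \<cdot> u)" unfolding zero_arr_def using u v Z by auto
  ultimately show ?thesis by blast
qed

definition zr where "zr A B = (SOME f. f \<in> hom C A B \<and> zero_arr C f)"

lemma zr: "A \<in> Ob C \<Longrightarrow> B \<in> Ob C \<Longrightarrow> zr A B \<in> hom C A B \<and> zero_arr C (zr A B)"
  unfolding zr_def using zero_exists by (rule someI_ex) 

lemma zr_arr[simp]: "A \<in> Ob C \<Longrightarrow> B \<in> Ob C \<Longrightarrow> zr A B \<in> Arr C" using zr by auto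
lemma zr_dom[simp]: "A \<in> Ob C \<Longrightarrow> B \<in> Ob C \<Longrightarrow> Dom C (zr A B) = A" using zr by auto
lemma zr_cod[simp]: "A \<in> Ob C \<Longrightarrow> B \<in> Ob C \<Longrightarrow> Cod C (zr A B) = B" using zr by auto
lemma zr_zero[simp]: "A \<in> Ob C \<Longrightarrow> B \<in> Ob C \<Longrightarrow> zero_arr C (zr A B)" using zr by auto

lemma zero_arr_arr: "zero_arr C f \<Longrightarrow> f \<in> Arr C" by (simp add: zero_arr_def)

lemma zero_eq: "zero_arr C f \<Longrightarrow> f = zr (Dom C f) (Cod C f)"
  using zero_unique[of f "zr (Dom C f) (Cod C f)"] zero_arr_arr[of f] by auto

lemma zero_comp_r: "zero_arr C f \<Longrightarrow> g \<in> Arr C \<Longrightarrow> Cod C f = Dom C g \<Longrightarrow> zero_arr C (g \<cdot> f)"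
proof -
  assume a: "zero_arr C f" "g \<in> Arr C" "Cod C f = Dom C g"
  obtain Z u v where Z: "zero_object C Z" "u \<in> hom C (Dom C f) Z" "v \<in> hom C Z (Cod C f)" and e: "f = v \<cdot> u"
    using a(1) unfolding zero_arr_def by blast
  have ar: "u \<in> Arr C" "v \<in> Arr C" "Cod C u = Z" "Dom C v = Z" "Dom C u = Dom C f" "Cod C v = Cod C f" using Z by auto
  have "g \<cdot> f = (g \<cdot> v) \<cdot> u" unfolding e by (rule assoc[symmetric]) (use ar a in auto)
  moreover have "g \<cdot> f \<in> Arr C" "Dom C (g \<cdot> f) = Dom C f" "Cod C (g \<cdot> f) = Cod C g" using a zero_arr_arr[OF a(1)] by auto
  moreover have "g \<cdot> v \<in> hom C Z (Cod C g)" using ar a by auto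
  ultimately show ?thesis unfolding zero_arr_def using Z(1,2) by metis
qed

lemma zero_comp_l: "zero_arr C f \<Longrightarrow> g \<in> Arr C \<Longrightarrow> Cod C g = Dom C f \<Longrightarrow> zero_arr C (f \<cdot> g)"
proof -
  assume a: "zero_arr C f" "g \<in> Arr C" "Cod C g = Dom C f"
  obtain Z u v where Z: "zero_object C Z" "u \<in> hom C (Dom C f) Z" "v \<in> hom C Z (Cod C f)" and e: "f = v \<cdot> u"
    using a(1) unfolding zero_arr_def by blast
  have ar: "u \<in> Arr C" "v \<in> Arr C" "Cod C u = Z" "Dom C v = Z" "Dom C u = Dom C f" "Cod C v = Cod C f" using Z by auto
  have "f \<cdot> g = v \<cdot> (u \<cdot> g)" unfolding e by (rule assoc) (use ar a in auto)
  moreover have "f \<cdot> g \<in> Arr C" "Dom C (f \<cdot> g) = Dom C g" "Cod C (f \<cdot> g) = Cod C f" using a zero_arr_arr[OF a(1)] by auto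
  moreover have "u \<cdot> g \<in> hom C (Dom C g) Z" using ar a by auto
  ultimately show ?thesis unfolding zero_arr_def using Z(1,3) by metis
qed

lemma zero_st: "zero_arr C f \<Longrightarrow> zero_arr C (st f)"
proof -
  assume a: "zero_arr C f"
  obtain Z u v where Z: "zero_object C Z" "u \<in> hom C (Dom C f) Z" "v \<in> hom C Z (Cod C f)" and e: "f = v \<cdot> u"
    using a(1) unfolding zero_arr_def by blast
  have ar: "u \<in> Arr C" "v \<in> Arr C" "Cod C u = Z" "Dom C v = Z" "Dom C u = Dom C f" "Cod C v = Cod C f" using Z by auto
  have "st f = st u \<cdot> st v" unfolding e by (rule st_comp) (use ar in auto)
  moreover have "st f \<in> Arr C" "Dom C (st f) = Cod C f" "Cod C (st f) = Dom C f" using zero_arr_arr[OF a(1)] by auto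
  moreover have "st v \<in> hom C (Cod C f) Z" "st u \<in> hom C Z (Dom C f)" using ar by auto
  ultimately show ?thesis unfolding zero_arr_def using Z(1) by metis
qed

lemma zr_comp_r[simp]: "f \<in> Arr C \<Longrightarrow> Cod C f = A \<Longrightarrow> B \<in> Ob C \<Longrightarrow> zr A B \<cdot> f = zr (Dom C f) B"
  using zero_eq[OF zero_comp_l[OF zr_zero, of A B f]] by auto
lemma zr_comp_l[simp]: "g \<in> Arr C \<Longrightarrow> Dom C g = B \<Longrightarrow> A \<in> Ob C \<Longrightarrow> g \<cdot> zr A B = zr A (Cod C g)"
  using zero_eq[OF zero_comp_r[OF zr_zero, of A B g]] by auto
lemma zr_st[simp]: "A \<in> Ob C \<Longrightarrow> B \<in> Ob C \<Longrightarrow> st (zr A B) = zr B A"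
  using zero_eq[OF zero_st[OF zr_zero, of A B]] by auto

section \<open>Products and biproducts\<close>

lemma prod_uniq: "is_product C X1 X2 P p1 p2 \<Longrightarrow> a \<in> hom C W P \<Longrightarrow> b \<in> hom C W P
   \<Longrightarrow> p1 \<cdot> a = p1 \<cdot> b \<Longrightarrow> p2 \<cdot> a = p2 \<cdot> b \<Longrightarrow> a = b"
proof -
  assume a: "is_product C X1 X2 P p1 p2" "a \<in> hom C W P" "b \<in> hom C W P" "p1 \<cdot> a = p1 \<cdot> b" "p2 \<cdot> a = p2 \<cdot> b"
  have "p1 \<cdot> a \<in> hom C W X1" "p2 \<cdot> a \<in> hom C W X2" using a unfolding is_product_def by auto
  then show ?thesis using a unfolding is_product_def by metis
qed

lemma prod_ex: "is_product C X1 X2 P p1 p2 \<Longrightarrow> f1 \<in> hom C W X1 \<Longrightarrow> f2 \<in> hom C W X2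
   \<Longrightarrow> \<exists>u. u \<in> hom C W P \<and> p1 \<cdot> u = f1 \<and> p2 \<cdot> u = f2"
  unfolding is_product_def by metis

lemma coprod_uniq: "is_coproduct C X1 X2 P i1 i2 \<Longrightarrow> a \<in> hom C P W \<Longrightarrow> b \<in> hom C P W
   \<Longrightarrow> a \<cdot> i1 = b \<cdot> i1 \<Longrightarrow> a \<cdot> i2 = b \<cdot> i2 \<Longrightarrow> a = b"
proof -
  assume a: "is_coproduct C X1 X2 P i1 i2" "a \<in> hom C P W" "b \<in> hom C P W" "a \<cdot> i1 = b \<cdot> i1" "a \<cdot> i2 = b \<cdot> i2"
  have "a \<cdot> i1 \<in> hom C X1 W" "a \<cdot> i2 \<in> hom C X2 W" using a unfolding is_coproduct_def by auto
  then show ?thesis using a unfolding is_coproduct_def by metis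
qed

lemma coprod_ex: "is_coproduct C X1 X2 P i1 i2 \<Longrightarrow> f1 \<in> hom C X1 W \<Longrightarrow> f2 \<in> hom C X2 W
   \<Longrightarrow> \<exists>u. u \<in> hom C P W \<and> u \<cdot> i1 = f1 \<and> u \<cdot> i2 = f2"
  unfolding is_coproduct_def by metis

lemma bip:
  assumes "biproduct C X1 X2 X s1 r1 s2 r2"
  shows "s1 \<in> Arr C" "Dom C s1 = X1" "Cod C s1 = X"
    "s2 \<in> Arr C" "Dom C s2 = X2" "Cod C s2 = X"
    "r1 \<in> Arr C" "Dom C r1 = X" "Cod C r1 = X1"
    "r2 \<in> Arr C" "Dom C r2 = X" "Cod C r2 = X2"
    "X1 \<in> Ob C" "X2 \<in> Ob C" "X \<in> Ob C"
    "r1 \<cdot> s1 = Idt C X1" "r2 \<cdot> s2 = Idt C X2"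
    "r2 \<cdot> s1 = zr X1 X2" "r1 \<cdot> s2 = zr X2 X1"
    "is_product C X1 X2 X r1 r2" "is_coproduct C X1 X2 X s1 s2"
proof -
  have h: "s1 \<in> hom C X1 X" "r1 \<in> hom C X X1" "s2 \<in> hom C X2 X" "r2 \<in> hom C X X2"
    "r1 \<cdot> s1 = Idt C X1" "r2 \<cdot> s2 = Idt C X2" "zero_arr C (r2 \<cdot> s1)" "zero_arr C (r1 \<cdot> s2)"
    "is_product C X1 X2 X r1 r2" "is_coproduct C X1 X2 X s1 s2"
    using assms unfolding biproduct_def by blast+
  show "s1 \<in> Arr C" "Dom C s1 = X1" "Cod C s1 = X"
    "s2 \<in> Arr C" "Dom C s2 = X2" "Cod C s2 = X"
    "r1 \<in> Arr C" "Dom C r1 = X" "Cod C r1 = X1"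
    "r2 \<in> Arr C" "Dom C r2 = X" "Cod C r2 = X2"
    "X1 \<in> Ob C" "X2 \<in> Ob C" "X \<in> Ob C"
    "r1 \<cdot> s1 = Idt C X1" "r2 \<cdot> s2 = Idt C X2"
    "is_product C X1 X2 X r1 r2" "is_coproduct C X1 X2 X s1 s2" using h dom_ob cod_ob by auto
  show "r2 \<cdot> s1 = zr X1 X2" "r1 \<cdot> s2 = zr X2 X1" using zero_eq[OF h(7)] zero_eq[OF h(8)] h by auto
qed

lemma prod_swap: "is_product C X1 X2 X r1 r2 \<Longrightarrow> is_product C X2 X1 X r2 r1"
  unfolding is_product_def
proof (intro conjI allI impI)
  fix W f1 f2
  assume a: "r1 \<in> hom C X X1 \<and> r2 \<in> hom C X X2 \<and>
    (\<forall>W f1 f2. f1 \<in> hom C W X1 \<longrightarrow> f2 \<in> hom C W X2 \<longrightarrow> (\<exists>!u. u \<in> hom C W X \<and> r1 \<cdot> u = f1 \<and> r2 \<cdot> u = f2))"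
    "f1 \<in> hom C W X2" "f2 \<in> hom C W X1"
  then have "\<exists>!u. u \<in> hom C W X \<and> r1 \<cdot> u = f2 \<and> r2 \<cdot> u = f1" by blast
  then show "\<exists>!u. u \<in> hom C W X \<and> r2 \<cdot> u = f1 \<and> r1 \<cdot> u = f2" by (simp only: conj_commute conj_left_commute)
qed (simp_all only: is_product_def)

lemma coprod_swap: "is_coproduct C X1 X2 X r1 r2 \<Longrightarrow> is_coproduct C X2 X1 X r2 r1"
  unfolding is_coproduct_def
proof (intro conjI allI impI)
  fix W f1 f2
  assume a: "r1 \<in> hom C X1 X \<and> r2 \<in> hom C X2 X \<and>
    (\<forall>W f1 f2. f1 \<in> hom C X1 W \<longrightarrow> f2 \<in> hom C X2 W \<longrightarrow> (\<exists>!u. u \<in> hom C X W \<and> u \<cdot> r1 = f1 \<and> u \<cdot> r2 = f2))"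
    "f1 \<in> hom C X2 W" "f2 \<in> hom C X1 W"
  then have "\<exists>!u. u \<in> hom C X W \<and> u \<cdot> r1 = f2 \<and> u \<cdot> r2 = f1" by blast
  then show "\<exists>!u. u \<in> hom C X W \<and> u \<cdot> r2 = f1 \<and> u \<cdot> r1 = f2" by (simp only: conj_commute conj_left_commute)
qed (simp_all only: is_coproduct_def)

lemma bip_swap: "biproduct C X1 X2 X s1 r1 s2 r2 \<Longrightarrow> biproduct C X2 X1 X s2 r2 s1 r1"
  unfolding biproduct_def using prod_swap coprod_swap by blast

lemma obip_bip: "orthonormal_biproduct C X1 X2 X s1 r1 s2 r2 \<Longrightarrow> biproduct C X1 X2 X s1 r1 s2 r2"
  unfolding orthonormal_biproduct_def by blast


section \<open>Sums\<close>

lemma sum_cmp: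
  assumes b1: "biproduct C B B Z s1 r1 s2 r2" and u: "u \<in> hom C A Z" and v: "v \<in> hom C Z B" "v \<cdot> s1 = Idt C B" "v \<cdot> s2 = Idt C B"
  and b2: "biproduct C B B Z' s1' r1' s2' r2'" and u': "u' \<in> hom C A Z'" "r1' \<cdot> u' = r1 \<cdot> u" "r2' \<cdot> u' = r2 \<cdot> u"
  and v': "v' \<in> hom C Z' B" "v' \<cdot> s1' = Idt C B" "v' \<cdot> s2' = Idt C B"
  shows "v \<cdot> u = v' \<cdot> u'"
proof -
  note B1 = bip[OF b1] and B2 = bip[OF b2]
  obtain p where p: "p \<in> hom C Z Z'" "p \<cdot> s1 = s1'" "p \<cdot> s2 = s2'"
    using coprod_ex[OF B1(21), of s1' Z' s2'] B2 by auto
  have pa: "p \<in> Arr C" "Dom C p = Z" "Cod C p = Z'" using p by auto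
  have r1p: "r1' \<cdot> p = r1"
    by (rule coprod_uniq[OF B1(21), of _ B]) (use pa p B1 B2 in simp_all)
  have r2p: "r2' \<cdot> p = r2"
    by (rule coprod_uniq[OF B1(21), of _ B]) (use pa p B1 B2 in simp_all)
  have vp: "v' \<cdot> p = v"
    by (rule coprod_uniq[OF B1(21), of _ B]) (use pa p B1 B2 v v' in simp_all)
  have pu: "p \<cdot> u = u'"
    by (rule prod_uniq[OF B2(20), of _ A]) (use pa p B1 B2 u u' reassoc[OF r1p] reassoc[OF r2p] in simp_all)
  have "v \<cdot> u = (v' \<cdot> p) \<cdot> u" by (simp only: vp)
  also have "\<dots> = v' \<cdot> (p \<cdot> u)" by (rule assoc) (use pa u v' in simp_all)
  finally show ?thesis by (simp only: pu)
qed

lemma arr_sum_unique: "arr_sum C f g h \<Longrightarrow> arr_sum C f g h' \<Longrightarrow> h = h'"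
proof -
  assume a1: "arr_sum C f g h" and a2: "arr_sum C f g h'"
  obtain A B Z s1 r1 s2 r2 u v where h1: "f \<in> hom C A B" "g \<in> hom C A B" "h \<in> hom C A B"
     "biproduct C B B Z s1 r1 s2 r2" "u \<in> hom C A Z" "r1 \<cdot> u = f" "r2 \<cdot> u = g"
     "v \<in> hom C Z B" "v \<cdot> s1 = Idt C B" "v \<cdot> s2 = Idt C B" and e1: "h = v \<cdot> u"
    using a1 unfolding arr_sum_def by blast
  obtain A' B' Z' s1' r1' s2' r2' u' v' where h2: "f \<in> hom C A' B'" "g \<in> hom C A' B'" "h' \<in> hom C A' B'"
     "biproduct C B' B' Z' s1' r1' s2' r2'" "u' \<in> hom C A' Z'" "r1' \<cdot> u' = f" "r2' \<cdot> u' = g"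
     "v' \<in> hom C Z' B'" "v' \<cdot> s1' = Idt C B'" "v' \<cdot> s2' = Idt C B'" and e2: "h' = v' \<cdot> u'"
    using a2 unfolding arr_sum_def by blast
  have AB: "A' = A" "B' = B" using h1(1) h2(1) by auto
  have b2: "biproduct C B B Z' s1' r1' s2' r2'" using h2(4) AB by simp
  have u2: "u' \<in> hom C A Z'" using h2(5) AB by simp
  have v2: "v' \<in> hom C Z' B" "v' \<cdot> s1' = Idt C B" "v' \<cdot> s2' = Idt C B" using h2(8,9,10) AB by simp_all
  have q: "r1' \<cdot> u' = r1 \<cdot> u" "r2' \<cdot> u' = r2 \<cdot> u" using h1(6,7) h2(6,7) by simp_all
  show ?thesis unfolding e1 e2
    by (rule sum_cmp[OF h1(4,5,8,9,10) b2 u2 q v2])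
qed

lemma arr_sum_ex: "f \<in> hom C A B \<Longrightarrow> g \<in> hom C A B \<Longrightarrow> \<exists>h. arr_sum C f g h"
proof -
  assume f: "f \<in> hom C A B" and g: "g \<in> hom C A B"
  have B: "B \<in> Ob C" using f cod_ob by auto
  obtain Z s1 r1 s2 r2 where o: "orthonormal_biproduct C B B Z s1 r1 s2 r2" using obip_ex[OF B B] by blast
  note b = obip_bip[OF o] note B1 = bip[OF b]
  obtain u where u: "u \<in> hom C A Z" "r1 \<cdot> u = f" "r2 \<cdot> u = g" using prod_ex[OF B1(20) f g] by blast
  obtain v where v: "v \<in> hom C Z B" "v \<cdot> s1 = Idt C B" "v \<cdot> s2 = Idt C B"
    using coprod_ex[OF B1(21), of "Idt C B" B "Idt C B"] B by auto
  have "v \<cdot> u \<in> hom C A B" using u v by auto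
  then have "arr_sum C f g (v \<cdot> u)" unfolding arr_sum_def using f g b u v by blast
  then show ?thesis by blast
qed

definition pl where "pl f g = (THE h. arr_sum C f g h)"

lemma pl_eq: "arr_sum C f g h \<Longrightarrow> pl f g = h"
  unfolding pl_def using arr_sum_unique by blast

lemma pl_sum: "f \<in> hom C A B \<Longrightarrow> g \<in> hom C A B \<Longrightarrow> arr_sum C f g (pl f g)"
  using arr_sum_ex pl_eq by metis

lemma pl_hom: "f \<in> hom C A B \<Longrightarrow> g \<in> hom C A B \<Longrightarrow> pl f g \<in> hom C A B"
proof -
  assume a: "f \<in> hom C A B" "g \<in> hom C A B"
  obtain A' B' where "f \<in> hom C A' B'" "pl f g \<in> hom C A' B'" using pl_sum[OF a] unfolding arr_sum_def by blast
  then show ?thesis using a by auto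
qed

lemma pl_arr[simp]: "f \<in> Arr C \<Longrightarrow> g \<in> Arr C \<Longrightarrow> Dom C f = Dom C g \<Longrightarrow> Cod C f = Cod C g \<Longrightarrow> pl f g \<in> Arr C"
  using pl_hom[of f "Dom C f" "Cod C f" g] by auto
lemma pl_dom[simp]: "f \<in> Arr C \<Longrightarrow> g \<in> Arr C \<Longrightarrow> Dom C f = Dom C g \<Longrightarrow> Cod C f = Cod C g \<Longrightarrow> Dom C (pl f g) = Dom C f"
  using pl_hom[of f "Dom C f" "Cod C f" g] by auto
lemma pl_cod[simp]: "f \<in> Arr C \<Longrightarrow> g \<in> Arr C \<Longrightarrow> Dom C f = Dom C g \<Longrightarrow> Cod C f = Cod C g \<Longrightarrow> Cod C (pl f g) = Cod C f"
  using pl_hom[of f "Dom C f" "Cod C f" g] by auto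

lemma pl_intro:
  assumes b: "biproduct C B B Z s1 r1 s2 r2" and u: "u \<in> hom C A Z" and v: "v \<in> hom C Z B" "v \<cdot> s1 = Idt C B" "v \<cdot> s2 = Idt C B"
  shows "pl (r1 \<cdot> u) (r2 \<cdot> u) = v \<cdot> u"
proof -
  note B1 = bip[OF b]
  have "r1 \<cdot> u \<in> hom C A B" "r2 \<cdot> u \<in> hom C A B" "v \<cdot> u \<in> hom C A B" using u v B1 by auto
  then have "arr_sum C (r1 \<cdot> u) (r2 \<cdot> u) (v \<cdot> u)" unfolding arr_sum_def
    using b u v by blast
  then show ?thesis by (rule pl_eq)
qed


lemma bipB: "B \<in> Ob C \<Longrightarrow> \<exists>Z s1 r1 s2 r2 v. orthonormal_biproduct C B B Z s1 r1 s2 r2 \<and>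
   v \<in> hom C Z B \<and> v \<cdot> s1 = Idt C B \<and> v \<cdot> s2 = Idt C B"
proof -
  assume B: "B \<in> Ob C"
  obtain Z s1 r1 s2 r2 where o: "orthonormal_biproduct C B B Z s1 r1 s2 r2" using obip_ex[OF B B] by blast
  note b = obip_bip[OF o] note B1 = bip[OF b]
  obtain v where v: "v \<in> hom C Z B" "v \<cdot> s1 = Idt C B" "v \<cdot> s2 = Idt C B"
    using coprod_ex[OF B1(21), of "Idt C B" B "Idt C B"] B by auto
  show ?thesis using o v by blast
qed

lemma pl_comm: "f \<in> hom C A B \<Longrightarrow> g \<in> hom C A B \<Longrightarrow> pl f g = pl g f"
proof -
  assume f: "f \<in> hom C A B" and g: "g \<in> hom C A B"
  have B: "B \<in> Ob C" using f cod_ob by auto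
  obtain Z s1 r1 s2 r2 v where o: "orthonormal_biproduct C B B Z s1 r1 s2 r2" and
    v: "v \<in> hom C Z B" "v \<cdot> s1 = Idt C B" "v \<cdot> s2 = Idt C B" using bipB[OF B] by blast
  note b = obip_bip[OF o] note B1 = bip[OF b]
  obtain u where u: "u \<in> hom C A Z" "r1 \<cdot> u = f" "r2 \<cdot> u = g" using prod_ex[OF B1(20) f g] by blast
  have "pl f g = v \<cdot> u" using pl_intro[OF b u(1) v] u by simp
  moreover have "pl g f = v \<cdot> u" using pl_intro[OF bip_swap[OF b] u(1) v(1) v(3) v(2)] u by simp
  ultimately show ?thesis by simp
qed

lemma pl_zero_l: "f \<in> hom C A B \<Longrightarrow> pl (zr A B) f = f"
proof -
  assume f: "f \<in> hom C A B"
  have B: "B \<in> Ob C" and A: "A \<in> Ob C" using f cod_ob dom_ob by auto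
  obtain Z s1 r1 s2 r2 v where o: "orthonormal_biproduct C B B Z s1 r1 s2 r2" and
    v: "v \<in> hom C Z B" "v \<cdot> s1 = Idt C B" "v \<cdot> s2 = Idt C B" using bipB[OF B] by blast
  note b = obip_bip[OF o] note B1 = bip[OF b]
  have u: "s2 \<cdot> f \<in> hom C A Z" using f B1 by auto
  have "pl (r1 \<cdot> (s2 \<cdot> f)) (r2 \<cdot> (s2 \<cdot> f)) = v \<cdot> (s2 \<cdot> f)" by (rule pl_intro[OF b u v])
  then show ?thesis using f B1 v reassoc[OF B1(19)] reassoc[OF B1(17)] reassoc[OF v(3)] by simp
qed

lemma pl_zero_r: "f \<in> hom C A B \<Longrightarrow> pl f (zr A B) = f"
  using pl_zero_l pl_comm[of f A B "zr A B"] zr by auto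

lemma pl_comp_r: "f \<in> hom C A B \<Longrightarrow> g \<in> hom C A B \<Longrightarrow> k \<in> hom C A' A \<Longrightarrow> pl (f \<cdot> k) (g \<cdot> k) = pl f g \<cdot> k"
proof -
  assume f: "f \<in> hom C A B" and g: "g \<in> hom C A B" and k: "k \<in> hom C A' A"
  have B: "B \<in> Ob C" using f cod_ob by auto
  obtain Z s1 r1 s2 r2 v where o: "orthonormal_biproduct C B B Z s1 r1 s2 r2" and
    v: "v \<in> hom C Z B" "v \<cdot> s1 = Idt C B" "v \<cdot> s2 = Idt C B" using bipB[OF B] by blast
  note b = obip_bip[OF o] note B1 = bip[OF b]
  obtain u where u: "u \<in> hom C A Z" "r1 \<cdot> u = f" "r2 \<cdot> u = g" using prod_ex[OF B1(20) f g] by blast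
  have "pl f g = v \<cdot> u" using pl_intro[OF b u(1) v] u by simp
  moreover have "u \<cdot> k \<in> hom C A' Z" using u k by auto
  note pl_intro[OF b this v]
  ultimately show ?thesis using reassoc[OF u(2)] reassoc[OF u(3)] u k v B1 by simp
qed

lemma pl_comp_l: "f \<in> hom C A B \<Longrightarrow> g \<in> hom C A B \<Longrightarrow> h \<in> hom C B B' \<Longrightarrow> pl (h \<cdot> f) (h \<cdot> g) = h \<cdot> pl f g"
proof -
  assume f: "f \<in> hom C A B" and g: "g \<in> hom C A B" and h: "h \<in> hom C B B'"
  have B: "B \<in> Ob C" "B' \<in> Ob C" using f h cod_ob by auto
  obtain Z s1 r1 s2 r2 v where o: "orthonormal_biproduct C B B Z s1 r1 s2 r2" and
    v: "v \<in> hom C Z B" "v \<cdot> s1 = Idt C B" "v \<cdot> s2 = Idt C B" using bipB[OF B(1)] by blast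
  note b = obip_bip[OF o] note B1 = bip[OF b]
  obtain Z' s1' r1' s2' r2' v' where o': "orthonormal_biproduct C B' B' Z' s1' r1' s2' r2'" and
    v': "v' \<in> hom C Z' B'" "v' \<cdot> s1' = Idt C B'" "v' \<cdot> s2' = Idt C B'" using bipB[OF B(2)] by blast
  note b' = obip_bip[OF o'] note B2 = bip[OF b']
  obtain u where u: "u \<in> hom C A Z" "r1 \<cdot> u = f" "r2 \<cdot> u = g" using prod_ex[OF B1(20) f g] by blast
  obtain H where H: "H \<in> hom C Z Z'" "H \<cdot> s1 = s1' \<cdot> h" "H \<cdot> s2 = s2' \<cdot> h"
    using coprod_ex[OF B1(21), of "s1' \<cdot> h" Z' "s2' \<cdot> h"] B2 h by auto
  have r1H: "r1' \<cdot> H = h \<cdot> r1"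
    by (rule coprod_uniq[OF B1(21), of _ B']) (use H h B1 B2 reassoc[OF B2(16)] reassoc[OF B2(19)] in simp_all)
  have r2H: "r2' \<cdot> H = h \<cdot> r2"
    by (rule coprod_uniq[OF B1(21), of _ B']) (use H h B1 B2 reassoc[OF B2(17)] reassoc[OF B2(18)] in simp_all)
  have vH: "v' \<cdot> H = h \<cdot> v"
    by (rule coprod_uniq[OF B1(21), of _ B']) (use H h B1 B2 v v' reassoc[OF v'(2)] reassoc[OF v'(3)] in simp_all)
  have "pl f g = v \<cdot> u" using pl_intro[OF b u(1) v] u by simp
  moreover have "H \<cdot> u \<in> hom C A Z'" using u H by auto
  note pl_intro[OF b' this v']
  moreover have "v' \<in> Arr C" "Dom C v' = Z'" "u \<in> Arr C" "Cod C u = Z" using v' u by auto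
  ultimately show ?thesis using reassoc[OF r1H] reassoc[OF r2H] reassoc[OF vH] u H h v B1 B2
    reassoc[OF u(2)] reassoc[OF u(3)] by simp
qed


lemma pl_interchange: "a \<in> hom C A B \<Longrightarrow> b \<in> hom C A B \<Longrightarrow> c \<in> hom C A B \<Longrightarrow> d \<in> hom C A B \<Longrightarrow>
  pl (pl a b) (pl c d) = pl (pl a c) (pl b d)"
proof -
  assume a: "a \<in> hom C A B" and b: "b \<in> hom C A B" and c: "c \<in> hom C A B" and d: "d \<in> hom C A B"
  have B: "B \<in> Ob C" using a cod_ob by auto
  obtain Z s1 r1 s2 r2 v where o: "orthonormal_biproduct C B B Z s1 r1 s2 r2" and
    v: "v \<in> hom C Z B" "v \<cdot> s1 = Idt C B" "v \<cdot> s2 = Idt C B" using bipB[OF B] by blast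
  note bp = obip_bip[OF o] note B1 = bip[OF bp]
  obtain x where x: "x \<in> hom C A Z" "r1 \<cdot> x = a" "r2 \<cdot> x = c" using prod_ex[OF B1(20) a c] by blast
  obtain y where y: "y \<in> hom C A Z" "r1 \<cdot> y = b" "r2 \<cdot> y = d" using prod_ex[OF B1(20) b d] by blast
  have w: "pl x y \<in> hom C A Z" using pl_hom x y by blast
  have r1w: "r1 \<cdot> pl x y = pl a b" using pl_comp_l[OF x(1) y(1), of r1 B] B1 x y by simp
  have r2w: "r2 \<cdot> pl x y = pl c d" using pl_comp_l[OF x(1) y(1), of r2 B] B1 x y by simp
  have vw: "v \<cdot> pl x y = pl (v \<cdot> x) (v \<cdot> y)" using pl_comp_l[OF x(1) y(1) v(1)] by simp
  have vx: "v \<cdot> x = pl a c" using pl_intro[OF bp x(1) v] x by simp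
  have vy: "v \<cdot> y = pl b d" using pl_intro[OF bp y(1) v] y by simp
  show ?thesis using pl_intro[OF bp w v] r1w r2w vw vx vy by simp
qed

lemma pl_assoc: "a \<in> hom C A B \<Longrightarrow> b \<in> hom C A B \<Longrightarrow> c \<in> hom C A B \<Longrightarrow> pl (pl a b) c = pl a (pl b c)"
proof -
  assume a: "a \<in> hom C A B" and b: "b \<in> hom C A B" and c: "c \<in> hom C A B"
  have AB: "A \<in> Ob C" "B \<in> Ob C" using a cod_ob dom_ob by auto
  have z: "zr A B \<in> hom C A B" using zr AB by auto
  have "pl (pl a b) (pl (zr A B) c) = pl (pl a (zr A B)) (pl b c)" by (rule pl_interchange[OF a b z c])
  then show ?thesis using pl_zero_l[OF c] pl_zero_r[OF a] by simp
qed

lemma bip_sum_id: "biproduct C X1 X2 X s1 r1 s2 r2 \<Longrightarrow> pl (s1 \<cdot> r1) (s2 \<cdot> r2) = Idt C X"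
proof -
  assume bp: "biproduct C X1 X2 X s1 r1 s2 r2"
  note B1 = bip[OF bp]
  have h1: "s1 \<cdot> r1 \<in> hom C X X" "s2 \<cdot> r2 \<in> hom C X X" using B1 by auto
  have r1h: "r1 \<in> hom C X X1" "r2 \<in> hom C X X2" using B1 by auto
  show ?thesis
  proof (rule prod_uniq[OF B1(20), of _ X])
    show "pl (s1 \<cdot> r1) (s2 \<cdot> r2) \<in> hom C X X" using pl_hom[OF h1] .
    show "Idt C X \<in> hom C X X" using B1 by auto
    show "r1 \<cdot> pl (s1 \<cdot> r1) (s2 \<cdot> r2) = r1 \<cdot> Idt C X"
      using pl_comp_l[OF h1 r1h(1)] B1 reassoc[OF B1(16)] reassoc[OF B1(19)] pl_zero_r[OF r1h(1)] by simp
    show "r2 \<cdot> pl (s1 \<cdot> r1) (s2 \<cdot> r2) = r2 \<cdot> Idt C X"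
      using pl_comp_l[OF h1 r1h(2)] B1 reassoc[OF B1(17)] reassoc[OF B1(18)] pl_zero_l[OF r1h(2)] by simp
  qed
qed


section \<open>Equality detector and cancellation\<close>

lemma eqdet: "B \<in> Ob C \<Longrightarrow> \<exists>Z s1 r1 s2 r2 q. orthonormal_biproduct C B B Z s1 r1 s2 r2 \<and> q \<in> Arr C \<and> Dom C q = Z \<and>
   (\<forall>u. u \<in> Arr C \<longrightarrow> Cod C u = Z \<longrightarrow> (zero_arr C (q \<cdot> u) \<longleftrightarrow> r1 \<cdot> u = r2 \<cdot> u))"
proof -
  assume B: "B \<in> Ob C"
  obtain Z s1 r1 s2 r2 where o: "orthonormal_biproduct C B B Z s1 r1 s2 r2" using obip_ex[OF B B] by blast
  note bp = obip_bip[OF o] note B1 = bip[OF bp]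
  obtain d where d: "d \<in> hom C B Z" "r1 \<cdot> d = Idt C B" "r2 \<cdot> d = Idt C B"
    using prod_ex[OF B1(20), of "Idt C B" B "Idt C B"] B by auto
  obtain q where k: "kernel C q d" using PH_diag[OF B o d] by blast
  have q: "q \<in> Arr C" "Dom C q = Z" "zero_arr C (q \<cdot> d)" 
    and kf: "\<And>h. h \<in> Arr C \<Longrightarrow> Cod C h = Dom C q \<Longrightarrow> zero_arr C (q \<cdot> h) \<Longrightarrow>
        (\<exists>!u. u \<in> hom C (Dom C h) (Dom C d) \<and> d \<cdot> u = h)"
    using k d unfolding kernel_def by auto
  have da: "d \<in> Arr C" "Dom C d = B" "Cod C d = Z" using d by auto
  have "\<forall>u. u \<in> Arr C \<longrightarrow> Cod C u = Z \<longrightarrow> (zero_arr C (q \<cdot> u) \<longleftrightarrow> r1 \<cdot> u = r2 \<cdot> u)"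
  proof (intro allI impI iffI)
    fix u assume u: "u \<in> Arr C" "Cod C u = Z" and z: "zero_arr C (q \<cdot> u)"
    obtain t where t: "t \<in> hom C (Dom C u) B" "d \<cdot> t = u" using kf[OF u(1) _ z] u q da by auto
    have "r1 \<cdot> u = t" "r2 \<cdot> u = t" using t reassoc[OF d(2)] reassoc[OF d(3)] da B1 by (auto dest: sym)
    then show "r1 \<cdot> u = r2 \<cdot> u" by simp
  next
    fix u assume u: "u \<in> Arr C" "Cod C u = Z" and e: "r1 \<cdot> u = r2 \<cdot> u"
    have t: "r1 \<cdot> u \<in> hom C (Dom C u) B" using u B1 by auto
    have du: "d \<cdot> (r1 \<cdot> u) = u"
      by (rule prod_uniq[OF B1(20), of _ "Dom C u"]) (use t da u B1 e reassoc[OF d(2)] reassoc[OF d(3)] in simp_all)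
    have "zero_arr C ((q \<cdot> d) \<cdot> (r1 \<cdot> u))" by (rule zero_comp_l[OF q(3)]) (use t da q in auto)
    then show "zero_arr C (q \<cdot> u)" using du t da q by simp
  qed
  then show ?thesis using o q by blast
qed

lemma cancel: "a \<in> hom C A B \<Longrightarrow> b \<in> hom C A B \<Longrightarrow> c \<in> hom C A B \<Longrightarrow> pl a c = pl b c \<Longrightarrow> a = b"
proof -
  assume a: "a \<in> hom C A B" and b: "b \<in> hom C A B" and c: "c \<in> hom C A B" and e: "pl a c = pl b c"
  have B: "B \<in> Ob C" "A \<in> Ob C" using a cod_ob dom_ob by auto
  obtain Z s1 r1 s2 r2 q where o: "orthonormal_biproduct C B B Z s1 r1 s2 r2" and q: "q \<in> Arr C" "Dom C q = Z"
    and qd: "\<And>u. u \<in> Arr C \<Longrightarrow> Cod C u = Z \<Longrightarrow> (zero_arr C (q \<cdot> u) \<longleftrightarrow> r1 \<cdot> u = r2 \<cdot> u)"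
    using eqdet[OF B(1)] by blast
  note bp = obip_bip[OF o] note B1 = bip[OF bp]
  define W where "W = Cod C q"
  have W: "W \<in> Ob C" using q W_def by auto
  have F: "zero_arr C (pl (q \<cdot> (s1 \<cdot> x)) (q \<cdot> (s2 \<cdot> y))) \<longleftrightarrow> x = y" if x: "x \<in> hom C A B" and y: "y \<in> hom C A B" for x y
  proof -
    have h: "s1 \<cdot> x \<in> hom C A Z" "s2 \<cdot> y \<in> hom C A Z" using x y B1 by auto
    have qh: "q \<in> hom C Z W" using q W_def by auto
    have p: "pl (s1 \<cdot> x) (s2 \<cdot> y) \<in> hom C A Z" using pl_hom[OF h] .
    have 1: "pl (q \<cdot> (s1 \<cdot> x)) (q \<cdot> (s2 \<cdot> y)) = q \<cdot> pl (s1 \<cdot> x) (s2 \<cdot> y)" by (rule pl_comp_l[OF h qh])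
    have xz: "x \<in> hom C A B" "zr A B \<in> hom C A B" "y \<in> hom C A B" using x y B zr by auto
    have 2: "r1 \<cdot> pl (s1 \<cdot> x) (s2 \<cdot> y) = x"
      using pl_comp_l[OF h, of r1 B] B1 x y reassoc[OF B1(16)] reassoc[OF B1(19)] pl_zero_r[OF xz(1)] by simp
    have 3: "r2 \<cdot> pl (s1 \<cdot> x) (s2 \<cdot> y) = y"
      using pl_comp_l[OF h, of r2 B] B1 x y reassoc[OF B1(17)] reassoc[OF B1(18)] pl_zero_l[OF xz(3)] by simp
    show ?thesis unfolding 1 using qd[of "pl (s1 \<cdot> x) (s2 \<cdot> y)"] p 2 3 by simp
  qed
  have qs: "q \<cdot> s1 \<in> hom C B W" "q \<cdot> s2 \<in> hom C B W" using q B1 W_def by auto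
  have ac: "pl a c \<in> hom C A B" using pl_hom[OF a c] .
  have hs: "q \<cdot> (s1 \<cdot> a) \<in> hom C A W" "q \<cdot> (s2 \<cdot> b) \<in> hom C A W" "q \<cdot> (s1 \<cdot> c) \<in> hom C A W" "q \<cdot> (s2 \<cdot> c) \<in> hom C A W"
    using a b c q B1 W_def by auto
  have "pl (pl (q \<cdot> (s1 \<cdot> a)) (q \<cdot> (s2 \<cdot> b))) (pl (q \<cdot> (s1 \<cdot> c)) (q \<cdot> (s2 \<cdot> c)))
     = pl (pl (q \<cdot> (s1 \<cdot> a)) (q \<cdot> (s1 \<cdot> c))) (pl (q \<cdot> (s2 \<cdot> b)) (q \<cdot> (s2 \<cdot> c)))"
    by (rule pl_interchange[OF hs])
  also have "\<dots> = pl (q \<cdot> (s1 \<cdot> pl a c)) (q \<cdot> (s2 \<cdot> pl b c))"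
    using pl_comp_l[OF a c qs(1)] pl_comp_l[OF b c qs(2)] a b c q B1 by simp
  also have "\<dots> = zr A W"
  proof -
    have hp: "q \<cdot> (s1 \<cdot> pl a c) \<in> hom C A W" "q \<cdot> (s2 \<cdot> pl a c) \<in> hom C A W" using ac q B1 W_def by auto
    have z: "zero_arr C (pl (q \<cdot> (s1 \<cdot> pl a c)) (q \<cdot> (s2 \<cdot> pl a c)))" using F[OF ac ac] by simp
    have d: "Dom C (pl (q \<cdot> (s1 \<cdot> pl a c)) (q \<cdot> (s2 \<cdot> pl a c))) = A"
       "Cod C (pl (q \<cdot> (s1 \<cdot> pl a c)) (q \<cdot> (s2 \<cdot> pl a c))) = W" using pl_hom[OF hp] by auto
    have "pl (q \<cdot> (s1 \<cdot> pl a c)) (q \<cdot> (s2 \<cdot> pl a c)) = zr A W" using zero_eq[OF z] unfolding d .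
    then show ?thesis using e by simp
  qed
  finally have 1: "pl (pl (q \<cdot> (s1 \<cdot> a)) (q \<cdot> (s2 \<cdot> b))) (pl (q \<cdot> (s1 \<cdot> c)) (q \<cdot> (s2 \<cdot> c))) = zr A W" .
  have 2: "pl (q \<cdot> (s1 \<cdot> c)) (q \<cdot> (s2 \<cdot> c)) = zr A W"
  proof -
    have z: "zero_arr C (pl (q \<cdot> (s1 \<cdot> c)) (q \<cdot> (s2 \<cdot> c)))" using F[OF c c] by simp
    have d: "Dom C (pl (q \<cdot> (s1 \<cdot> c)) (q \<cdot> (s2 \<cdot> c))) = A"
       "Cod C (pl (q \<cdot> (s1 \<cdot> c)) (q \<cdot> (s2 \<cdot> c))) = W" using pl_hom[OF hs(3) hs(4)] by auto
    show ?thesis using zero_eq[OF z] unfolding d .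
  qed
  have "pl (q \<cdot> (s1 \<cdot> a)) (q \<cdot> (s2 \<cdot> b)) = zr A W" using 1 unfolding 2 using pl_zero_r pl_hom[OF hs(1) hs(2)] by metis
  then have "zero_arr C (pl (q \<cdot> (s1 \<cdot> a)) (q \<cdot> (s2 \<cdot> b)))" using zr B W by auto
  then show "a = b" using F[OF a b] by simp
qed


section \<open>Positivity\<close>

lemma sq_zero: "y \<in> Arr C \<Longrightarrow> zero_arr C (st y \<cdot> y) \<Longrightarrow> zero_arr C y"
proof -
  assume y: "y \<in> Arr C" and z: "zero_arr C (st y \<cdot> y)"
  obtain k where k: "kernel C (st y) k" and ik: "isometry C k" using PH_ker[of "st y"] y by auto
  have ka: "k \<in> Arr C" "Cod C k = Cod C y" "zero_arr C (st y \<cdot> k)" and kik: "st k \<cdot> k = Idt C (Dom C k)"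
    and kf: "\<And>h. h \<in> Arr C \<Longrightarrow> Cod C h = Dom C (st y) \<Longrightarrow> zero_arr C (st y \<cdot> h) \<Longrightarrow>
        (\<exists>!u. u \<in> hom C (Dom C h) (Dom C k) \<and> k \<cdot> u = h)"
    using k ik y unfolding kernel_def isometry_def by auto
  obtain u where u: "u \<in> hom C (Dom C y) (Dom C k)" "k \<cdot> u = y" using kf[OF y _ z] y by auto
  have ua: "u \<in> Arr C" "Dom C u = Dom C y" "Cod C u = Dom C k" using u by auto
  have "st y = st u \<cdot> st k" using u(2)[symmetric] ua ka by simp
  moreover have "st u \<cdot> (st k \<cdot> k) = st u" using kik ua by simp
  ultimately have "st y \<cdot> k = st u" using ua ka by simp
  then have "zero_arr C (st u)" using ka by simp
  then have "zero_arr C u" using zero_st[of "st u"] ua by simp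
  then show ?thesis using zero_comp_r[of u k] ua ka u(2) by simp
qed

lemma sq_sum: "y \<in> hom C T Y1 \<Longrightarrow> z \<in> hom C T Y2 \<Longrightarrow> \<exists>w. w \<in> Arr C \<and> Dom C w = T \<and>
    st w \<cdot> w = pl (st y \<cdot> y) (st z \<cdot> z) \<and> (zero_arr C w \<longrightarrow> zero_arr C y \<and> zero_arr C z)"
proof -
  assume y: "y \<in> hom C T Y1" and z: "z \<in> hom C T Y2"
  have Y: "Y1 \<in> Ob C" "Y2 \<in> Ob C" using y z cod_ob by auto
  obtain G s1 r1 s2 r2 where o: "orthonormal_biproduct C Y1 Y2 G s1 r1 s2 r2" using obip_ex[OF Y] by blast
  note bp = obip_bip[OF o] note B1 = bip[OF bp]
  have sr: "st r1 = s1" "st r2 = s2" using o B1 unfolding orthonormal_biproduct_def by auto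
  obtain w where w: "w \<in> hom C T G" "r1 \<cdot> w = y" "r2 \<cdot> w = z" using prod_ex[OF B1(20) y z] by blast
  have wa: "w \<in> Arr C" "Dom C w = T" "Cod C w = G" using w by auto
  have ws1: "st w \<cdot> s1 = st y" using w sr wa B1 by (metis st_comp)
  have ws2: "st w \<cdot> s2 = st z" using w sr wa B1 by (metis st_comp)
  have h1: "s1 \<cdot> r1 \<in> hom C G G" "s2 \<cdot> r2 \<in> hom C G G" using B1 by auto
  have h2: "s1 \<cdot> y \<in> hom C T G" "s2 \<cdot> z \<in> hom C T G" using B1 y z by auto
  have "st w \<cdot> w = st w \<cdot> (pl (s1 \<cdot> r1) (s2 \<cdot> r2) \<cdot> w)" using bip_sum_id[OF bp] wa by simp
  also have "\<dots> = st w \<cdot> pl (s1 \<cdot> y) (s2 \<cdot> z)" using pl_comp_r[OF h1, of w T] wa B1 w by simp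
  also have "\<dots> = pl (st y \<cdot> y) (st z \<cdot> z)" using pl_comp_l[OF h2, of "st w" T] wa B1 y z
      reassoc[OF ws1] reassoc[OF ws2] by simp
  finally have e: "st w \<cdot> w = pl (st y \<cdot> y) (st z \<cdot> z)" .
  have "zero_arr C w \<longrightarrow> zero_arr C y \<and> zero_arr C z"
    using zero_comp_r[of w r1] zero_comp_r[of w r2] w wa B1 by auto
  then show ?thesis using e wa by blast
qed

lemma sq_sum_zero: "y \<in> hom C T Y1 \<Longrightarrow> z \<in> hom C T Y2 \<Longrightarrow> zero_arr C (pl (st y \<cdot> y) (st z \<cdot> z))
   \<Longrightarrow> zero_arr C y \<and> zero_arr C z"
  using sq_sum[of y T Y1 z Y2] sq_zero by metis


section \<open>Contractions\<close>

lemma contr_intro: "f \<in> Arr C \<Longrightarrow> y \<in> Arr C \<Longrightarrow> Dom C y = Dom C f \<Longrightarrow> pl (st f \<cdot> f) (st y \<cdot> y) = Idt C (Dom C f)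
  \<Longrightarrow> contraction C f"
proof -
  assume f: "f \<in> Arr C" and y: "y \<in> Arr C" "Dom C y = Dom C f" and e: "pl (st f \<cdot> f) (st y \<cdot> y) = Idt C (Dom C f)"
  have h: "st f \<cdot> f \<in> hom C (Dom C f) (Dom C f)" "st y \<cdot> y \<in> hom C (Dom C f) (Dom C f)" using f y by auto
  have "arr_sum C (st f \<cdot> f) (st y \<cdot> y) (Idt C (Dom C f))" using pl_sum[OF h] e by simp
  then show ?thesis unfolding contraction_def herm_le_def hermitian_def using f y by auto
qed

lemma contr_elim: "contraction C f \<Longrightarrow> f \<in> Arr C \<and> (\<exists>y. y \<in> Arr C \<and> Dom C y = Dom C f \<and> pl (st f \<cdot> f) (st y \<cdot> y) = Idt C (Dom C f))"
proof -
  assume c: "contraction C f"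
  then have f: "f \<in> Arr C" unfolding contraction_def by blast
  obtain y where y: "y \<in> Arr C" "Dom C y = Dom C (st f \<cdot> f)" "arr_sum C (st f \<cdot> f) (st y \<cdot> y) (Idt C (Dom C f))"
    using c unfolding contraction_def herm_le_def by blast
  have "pl (st f \<cdot> f) (st y \<cdot> y) = Idt C (Dom C f)" using pl_eq[OF y(3)] .
  then show ?thesis using f y by auto
qed

lemma contr_arr: "contraction C f \<Longrightarrow> f \<in> Arr C" unfolding contraction_def by blast

lemma contr_iso: "isometry C f \<Longrightarrow> contraction C f"
proof -
  assume i: "isometry C f"
  have f: "f \<in> Arr C" "st f \<cdot> f = Idt C (Dom C f)" using i unfolding isometry_def by auto
  have A: "Dom C f \<in> Ob C" using f by simp
  have "pl (st f \<cdot> f) (st (zr (Dom C f) (Dom C f)) \<cdot> zr (Dom C f) (Dom C f)) = Idt C (Dom C f)"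
    using f A pl_zero_r[of "Idt C (Dom C f)" "Dom C f" "Dom C f"] by simp
  then show ?thesis using contr_intro[OF f(1), of "zr (Dom C f) (Dom C f)"] A by simp
qed

lemma iso_id: "X \<in> Ob C \<Longrightarrow> isometry C (Idt C X)"
  unfolding isometry_def by simp

lemma contr_comp: "contraction C f \<Longrightarrow> contraction C g \<Longrightarrow> Cod C f = Dom C g \<Longrightarrow> contraction C (g \<cdot> f)"
proof -
  assume cf: "contraction C f" and cg: "contraction C g" and fg: "Cod C f = Dom C g"
  obtain yf where yf: "yf \<in> Arr C" "Dom C yf = Dom C f" "pl (st f \<cdot> f) (st yf \<cdot> yf) = Idt C (Dom C f)"
    using contr_elim[OF cf] by blast
  obtain yg where yg: "yg \<in> Arr C" "Dom C yg = Dom C g" "pl (st g \<cdot> g) (st yg \<cdot> yg) = Idt C (Dom C g)"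
    using contr_elim[OF cg] by blast
  have f: "f \<in> Arr C" and g: "g \<in> Arr C" using cf cg contr_arr by auto
  define A where "A = Dom C f"
  have h1: "st g \<cdot> g \<in> hom C (Dom C g) (Dom C g)" "st yg \<cdot> yg \<in> hom C (Dom C g) (Dom C g)" using g yg by auto
  have fh: "f \<in> hom C A (Dom C g)" using f fg A_def by auto
  have h2: "st g \<cdot> (g \<cdot> f) \<in> hom C A (Dom C g)" "st yg \<cdot> (yg \<cdot> f) \<in> hom C A (Dom C g)" using f g yg fg A_def by auto
  have sfh: "st f \<in> hom C (Dom C g) A" using f fg A_def by auto
  have "st f \<cdot> f = st f \<cdot> (pl (st g \<cdot> g) (st yg \<cdot> yg) \<cdot> f)" using yg(3) f fg by simp
  also have "\<dots> = st f \<cdot> pl (st g \<cdot> (g \<cdot> f)) (st yg \<cdot> (yg \<cdot> f))" using pl_comp_r[OF h1 fh] f g yg fg by simp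
  also have "\<dots> = pl (st (g \<cdot> f) \<cdot> (g \<cdot> f)) (st (yg \<cdot> f) \<cdot> (yg \<cdot> f))" using pl_comp_l[OF h2 sfh] f g yg fg by simp
  finally have e1: "st f \<cdot> f = pl (st (g \<cdot> f) \<cdot> (g \<cdot> f)) (st (yg \<cdot> f) \<cdot> (yg \<cdot> f))" .
  have ygf: "yg \<cdot> f \<in> hom C A (Cod C yg)" and yfh: "yf \<in> hom C A (Cod C yf)" using f yg yf fg A_def by auto
  obtain w where w: "w \<in> Arr C" "Dom C w = A" "st w \<cdot> w = pl (st (yg \<cdot> f) \<cdot> (yg \<cdot> f)) (st yf \<cdot> yf)"
    using sq_sum[OF ygf yfh] by blast
  have h3: "st (g \<cdot> f) \<cdot> (g \<cdot> f) \<in> hom C A A" "st (yg \<cdot> f) \<cdot> (yg \<cdot> f) \<in> hom C A A" "st yf \<cdot> yf \<in> hom C A A"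
    using f g yg yf fg A_def by auto
  have "pl (st (g \<cdot> f) \<cdot> (g \<cdot> f)) (st w \<cdot> w) = Idt C A"
    using yf(3) unfolding e1 w(3) pl_assoc[OF h3] A_def .
  then show ?thesis using contr_intro[of "g \<cdot> f" w] f g fg w A_def by simp
qed

lemma contr_proj: "orthonormal_biproduct C X1 X2 X s1 r1 s2 r2 \<Longrightarrow> contraction C r1 \<and> contraction C r2"
proof -
  assume o: "orthonormal_biproduct C X1 X2 X s1 r1 s2 r2"
  note bp = obip_bip[OF o] note B1 = bip[OF bp]
  have sr: "st r1 = s1" "st r2 = s2" using o B1 unfolding orthonormal_biproduct_def by auto
  have "contraction C r1" by (rule contr_intro[of r1 r2]) (use bip_sum_id[OF bp] sr B1 in simp_all)
  moreover have "pl (s2 \<cdot> r2) (s1 \<cdot> r1) = Idt C X" using bip_sum_id[OF bp] pl_comm[of "s1 \<cdot> r1" X X "s2 \<cdot> r2"] B1 by simp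
  then have "contraction C r2" by (intro contr_intro[of r2 r1]) (use sr B1 in simp_all)
  ultimately show ?thesis by blast
qed


lemma conj_sum: "f \<in> Arr C \<Longrightarrow> g \<in> Arr C \<Longrightarrow> yg \<in> Arr C \<Longrightarrow> Dom C yg = Dom C g \<Longrightarrow> Cod C f = Dom C g \<Longrightarrow>
  pl (st g \<cdot> g) (st yg \<cdot> yg) = Idt C (Dom C g) \<Longrightarrow>
  st f \<cdot> f = pl (st (g \<cdot> f) \<cdot> (g \<cdot> f)) (st (yg \<cdot> f) \<cdot> (yg \<cdot> f))"
proof -
  assume f: "f \<in> Arr C" and g: "g \<in> Arr C" and yg: "yg \<in> Arr C" "Dom C yg = Dom C g" and fg: "Cod C f = Dom C g"
    and e: "pl (st g \<cdot> g) (st yg \<cdot> yg) = Idt C (Dom C g)"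
  define A where "A = Dom C f"
  have h1: "st g \<cdot> g \<in> hom C (Dom C g) (Dom C g)" "st yg \<cdot> yg \<in> hom C (Dom C g) (Dom C g)" using g yg by auto
  have fh: "f \<in> hom C A (Dom C g)" using f fg A_def by auto
  have h2: "st g \<cdot> (g \<cdot> f) \<in> hom C A (Dom C g)" "st yg \<cdot> (yg \<cdot> f) \<in> hom C A (Dom C g)" using f g yg fg A_def by auto
  have sfh: "st f \<in> hom C (Dom C g) A" using f fg A_def by auto
  have "st f \<cdot> f = st f \<cdot> (pl (st g \<cdot> g) (st yg \<cdot> yg) \<cdot> f)" using e f fg by simp
  also have "\<dots> = st f \<cdot> pl (st g \<cdot> (g \<cdot> f)) (st yg \<cdot> (yg \<cdot> f))" using pl_comp_r[OF h1 fh] f g yg fg by simp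
  also have "\<dots> = pl (st (g \<cdot> f) \<cdot> (g \<cdot> f)) (st (yg \<cdot> f) \<cdot> (yg \<cdot> f))" using pl_comp_l[OF h2 sfh] f g yg fg by simp
  finally show ?thesis .
qed

lemma part1: "split_mono_in C (Con C) f \<Longrightarrow> isometry C f"
proof -
  assume sm: "split_mono_in C (Con C) f"
  obtain g where cf: "contraction C f" and cg: "contraction C g" and gd: "Dom C g = Cod C f" "Cod C g = Dom C f"
    and gf: "g \<cdot> f = Idt C (Dom C f)"
    using sm unfolding split_mono_in_def Con_def by blast
  obtain yf where yf: "yf \<in> Arr C" "Dom C yf = Dom C f" "pl (st f \<cdot> f) (st yf \<cdot> yf) = Idt C (Dom C f)"
    using contr_elim[OF cf] by blast
  obtain yg where yg: "yg \<in> Arr C" "Dom C yg = Dom C g" "pl (st g \<cdot> g) (st yg \<cdot> yg) = Idt C (Dom C g)"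
    using contr_elim[OF cg] by blast
  have f: "f \<in> Arr C" and g: "g \<in> Arr C" using cf cg contr_arr by auto
  define A where "A = Dom C f"
  have Ao: "A \<in> Ob C" using f A_def by simp
  have "st (g \<cdot> f) \<cdot> (g \<cdot> f) = Idt C A" using gf A_def Ao by simp
  then have e1: "st f \<cdot> f = pl (Idt C A) (st (yg \<cdot> f) \<cdot> (yg \<cdot> f))"
    using conj_sum[OF f g yg(1,2) gd(1)[symmetric] yg(3)] by simp
  have h: "Idt C A \<in> hom C A A" "st (yg \<cdot> f) \<cdot> (yg \<cdot> f) \<in> hom C A A" "st yf \<cdot> yf \<in> hom C A A" "zr A A \<in> hom C A A"
    using f g yg yf gd A_def Ao zr by auto
  have ygf: "yg \<cdot> f \<in> hom C A (Cod C yg)" and yfh: "yf \<in> hom C A (Cod C yf)" using f g yg yf gd A_def by auto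
  have hQR: "pl (st (yg \<cdot> f) \<cdot> (yg \<cdot> f)) (st yf \<cdot> yf) \<in> hom C A A" using pl_hom[OF h(2,3)] .
  have "pl (Idt C A) (pl (st (yg \<cdot> f) \<cdot> (yg \<cdot> f)) (st yf \<cdot> yf)) = Idt C A"
  proof -
    have "pl (st f \<cdot> f) (st yf \<cdot> yf) = Idt C A" using yf(3) A_def by simp
    then show ?thesis unfolding e1 pl_assoc[OF h(1-3)] .
  qed
  then have "pl (pl (st (yg \<cdot> f) \<cdot> (yg \<cdot> f)) (st yf \<cdot> yf)) (Idt C A) = pl (zr A A) (Idt C A)"
    using pl_comm[OF h(1) hQR] pl_zero_l[OF h(1)] by simp
  then have "pl (st (yg \<cdot> f) \<cdot> (yg \<cdot> f)) (st yf \<cdot> yf) = zr A A" using cancel[OF hQR h(4) h(1)] by simp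
  then have "zero_arr C (pl (st (yg \<cdot> f) \<cdot> (yg \<cdot> f)) (st yf \<cdot> yf))" using Ao by simp
  then have "zero_arr C (yg \<cdot> f)" using sq_sum_zero[OF ygf yfh] by blast
  then have "st (yg \<cdot> f) \<cdot> (yg \<cdot> f) = zr A A"
    using zero_comp_l[of "yg \<cdot> f" "st (yg \<cdot> f)"] zero_st[of "yg \<cdot> f"] zero_eq[of "st (yg \<cdot> f) \<cdot> (yg \<cdot> f)"]
      zero_comp_r[of "yg \<cdot> f" "st (yg \<cdot> f)"] ygf A_def
    by (metis cod_comp dom_comp hom_iff st_arr st_cod st_dom)
  then have "st f \<cdot> f = Idt C A" using e1 pl_zero_r[OF h(1)] by simp
  then show ?thesis unfolding isometry_def using f A_def by simp
qed

lemma part3a: "f \<in> Con C \<Longrightarrow> g \<in> Con C \<Longrightarrow> equaliser_in C (Arr C) f g e \<Longrightarrow> isometry C e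
   \<Longrightarrow> e \<in> Con C \<and> equaliser_in C (Con C) f g e"
proof -
  assume f: "f \<in> Con C" and g: "g \<in> Con C" and eq: "equaliser_in C (Arr C) f g e" and ie: "isometry C e"
  have ce: "e \<in> Con C" using contr_iso[OF ie] by (simp add: Con_def)
  have ea: "e \<in> Arr C" "st e \<cdot> e = Idt C (Dom C e)" using ie unfolding isometry_def by auto
  have E: "Dom C f = Dom C g" "Cod C f = Cod C g" "Cod C e = Dom C f" "f \<cdot> e = g \<cdot> e"
    and EU: "\<And>h. h \<in> Arr C \<Longrightarrow> Cod C h = Dom C f \<Longrightarrow> f \<cdot> h = g \<cdot> h \<Longrightarrow>
        (\<exists>!u. u \<in> Arr C \<and> Dom C u = Dom C h \<and> Cod C u = Dom C e \<and> e \<cdot> u = h)"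
    using eq unfolding equaliser_in_def by auto
  have "\<forall>h \<in> Con C. Cod C h = Dom C f \<longrightarrow> f \<cdot> h = g \<cdot> h \<longrightarrow>
        (\<exists>!u. u \<in> Con C \<and> Dom C u = Dom C h \<and> Cod C u = Dom C e \<and> e \<cdot> u = h)"
  proof (intro ballI impI)
    fix h assume h: "h \<in> Con C" "Cod C h = Dom C f" "f \<cdot> h = g \<cdot> h"
    have ch: "contraction C h" and ha: "h \<in> Arr C" using h(1) contr_arr by (auto simp: Con_def)
    obtain u where u: "u \<in> Arr C" "Dom C u = Dom C h" "Cod C u = Dom C e" "e \<cdot> u = h"
      and uu: "\<And>u'. u' \<in> Arr C \<and> Dom C u' = Dom C h \<and> Cod C u' = Dom C e \<and> e \<cdot> u' = h \<Longrightarrow> u' = u"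
      using EU[OF ha h(2,3)] by metis
    obtain y where y: "y \<in> Arr C" "Dom C y = Dom C h" "pl (st h \<cdot> h) (st y \<cdot> y) = Idt C (Dom C h)"
      using contr_elim[OF ch] by blast
    have "st h \<cdot> h = st (e \<cdot> u) \<cdot> (e \<cdot> u)" by (simp only: u(4))
    also have "\<dots> = st u \<cdot> (st e \<cdot> (e \<cdot> u))" using u(1-3) ea by simp
    also have "\<dots> = st u \<cdot> u" using reassoc[OF ea(2)] u(1-3) ea by simp
    finally have "st u \<cdot> u = st h \<cdot> h" by simp
    then have "contraction C u" using contr_intro[of u y] u y by simp
    then have "u \<in> Con C" by (simp add: Con_def)
    moreover have "\<And>u'. u' \<in> Con C \<and> Dom C u' = Dom C h \<and> Cod C u' = Dom C e \<and> e \<cdot> u' = h \<Longrightarrow> u' = u"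
      using uu contr_arr unfolding Con_def by blast
    ultimately show "\<exists>!u. u \<in> Con C \<and> Dom C u = Dom C h \<and> Cod C u = Dom C e \<and> e \<cdot> u = h" using u by blast
  qed
  then show ?thesis using ce f g E unfolding equaliser_in_def by blast
qed


lemma part3b: "f \<in> Con C \<Longrightarrow> g \<in> Con C \<Longrightarrow> Dom C f = Dom C g \<Longrightarrow> Cod C f = Cod C g \<Longrightarrow>
   \<exists>e. isometry C e \<and> equaliser_in C (Con C) f g e"
proof -
  assume cf: "f \<in> Con C" and cg: "g \<in> Con C" and fg: "Dom C f = Dom C g" "Cod C f = Cod C g"
  have fa: "f \<in> Arr C" and ga: "g \<in> Arr C" using cf cg contr_arr by (auto simp: Con_def)
  define A where "A = Dom C f"
  define B where "B = Cod C f"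
  have fh: "f \<in> hom C A B" "g \<in> hom C A B" using fa ga fg A_def B_def by auto
  have Bo: "B \<in> Ob C" using fa B_def by simp
  obtain Z s1 r1 s2 r2 q where o: "orthonormal_biproduct C B B Z s1 r1 s2 r2" and q: "q \<in> Arr C" "Dom C q = Z"
    and qd: "\<And>u. u \<in> Arr C \<Longrightarrow> Cod C u = Z \<Longrightarrow> (zero_arr C (q \<cdot> u) \<longleftrightarrow> r1 \<cdot> u = r2 \<cdot> u)"
    using eqdet[OF Bo] by blast
  note bp = obip_bip[OF o] note B1 = bip[OF bp]
  obtain m where m: "m \<in> hom C A Z" "r1 \<cdot> m = f" "r2 \<cdot> m = g" using prod_ex[OF B1(20) fh] by blast
  have ma: "m \<in> Arr C" "Dom C m = A" "Cod C m = Z" using m by auto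
  have pa: "q \<cdot> m \<in> Arr C" "Dom C (q \<cdot> m) = A" using ma q by auto
  obtain k where k: "kernel C (q \<cdot> m) k" and ik: "isometry C k" using PH_ker[OF pa(1)] by blast
  have ka: "k \<in> Arr C" "Cod C k = A" "zero_arr C ((q \<cdot> m) \<cdot> k)"
    and kf: "\<And>h. h \<in> Arr C \<Longrightarrow> Cod C h = A \<Longrightarrow> zero_arr C ((q \<cdot> m) \<cdot> h) \<Longrightarrow>
        (\<exists>!u. u \<in> hom C (Dom C h) (Dom C k) \<and> k \<cdot> u = h)"
    using k pa unfolding kernel_def by auto
  have "zero_arr C (q \<cdot> (m \<cdot> k))" using ka ma q by simp
  then have "r1 \<cdot> (m \<cdot> k) = r2 \<cdot> (m \<cdot> k)" using qd[of "m \<cdot> k"] ka ma by simp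
  then have fk: "f \<cdot> k = g \<cdot> k" using reassoc[OF m(2)] reassoc[OF m(3)] ka ma B1 by simp
  have "\<forall>h \<in> Arr C. Cod C h = Dom C f \<longrightarrow> f \<cdot> h = g \<cdot> h \<longrightarrow>
        (\<exists>!u. u \<in> Arr C \<and> Dom C u = Dom C h \<and> Cod C u = Dom C k \<and> k \<cdot> u = h)"
  proof (intro ballI impI)
    fix h assume h: "h \<in> Arr C" "Cod C h = Dom C f" "f \<cdot> h = g \<cdot> h"
    have "r1 \<cdot> (m \<cdot> h) = r2 \<cdot> (m \<cdot> h)" using h reassoc[OF m(2)] reassoc[OF m(3)] ma B1 A_def by simp
    then have "zero_arr C (q \<cdot> (m \<cdot> h))" using qd[of "m \<cdot> h"] h ma A_def by simp
    then have "zero_arr C ((q \<cdot> m) \<cdot> h)" using h ma q A_def by simp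
    then show "\<exists>!u. u \<in> Arr C \<and> Dom C u = Dom C h \<and> Cod C u = Dom C k \<and> k \<cdot> u = h"
      using kf[OF h(1)] h(2) A_def by simp
  qed
  then have "equaliser_in C (Arr C) f g k" unfolding equaliser_in_def using fa ga fg ka fk A_def by auto
  then show ?thesis using part3a[OF cf cg _ ik] ik by blast
qed


lemma part4: "equaliser_in C (Con C) f g e \<Longrightarrow> isometry C e"
proof -
  assume eq: "equaliser_in C (Con C) f g e"
  have cf: "f \<in> Con C" and cg: "g \<in> Con C" and ce: "e \<in> Con C" and E: "Dom C f = Dom C g" "Cod C f = Cod C g"
     "Cod C e = Dom C f" "f \<cdot> e = g \<cdot> e"
    and EU: "\<And>h. h \<in> Con C \<Longrightarrow> Cod C h = Dom C f \<Longrightarrow> f \<cdot> h = g \<cdot> h \<Longrightarrow>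
        (\<exists>!u. u \<in> Con C \<and> Dom C u = Dom C h \<and> Cod C u = Dom C e \<and> e \<cdot> u = h)"
    using eq unfolding equaliser_in_def by auto
  obtain e' where ie': "isometry C e'" and eq': "equaliser_in C (Con C) f g e'" using part3b[OF cf cg E(1,2)] by blast
  have ce': "e' \<in> Con C" and E': "Cod C e' = Dom C f" "f \<cdot> e' = g \<cdot> e'"
    and EU': "\<And>h. h \<in> Con C \<Longrightarrow> Cod C h = Dom C f \<Longrightarrow> f \<cdot> h = g \<cdot> h \<Longrightarrow>
        (\<exists>!u. u \<in> Con C \<and> Dom C u = Dom C h \<and> Cod C u = Dom C e' \<and> e' \<cdot> u = h)"
    using eq' unfolding equaliser_in_def by auto
  obtain u where u: "u \<in> Con C" "Dom C u = Dom C e" "Cod C u = Dom C e'" "e' \<cdot> u = e" using EU'[OF ce E(3,4)] by blast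
  obtain u' where u': "u' \<in> Con C" "Dom C u' = Dom C e'" "Cod C u' = Dom C e" "e \<cdot> u' = e'" using EU[OF ce' E'] by blast
  have ea: "e \<in> Arr C" "e' \<in> Arr C" "u \<in> Arr C" "u' \<in> Arr C" using ce ce' u u' contr_arr by (auto simp: Con_def)
  have cu: "contraction C u" "contraction C u'" using u u' by (auto simp: Con_def)
  have c1: "u' \<cdot> u \<in> Con C" using contr_comp[OF cu(1) cu(2)] u u' by (simp add: Con_def)
  have c2: "Idt C (Dom C e) \<in> Con C" using contr_iso[OF iso_id[of "Dom C e"]] ea by (simp add: Con_def)
  have "e \<cdot> (u' \<cdot> u) = e" using reassoc[OF u'(4)] u u' ea by simp
  moreover have "Dom C (u' \<cdot> u) = Dom C e" "Cod C (u' \<cdot> u) = Dom C e" using u(2,3) u'(2,3) ea by simp_all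
  moreover have "Dom C (Idt C (Dom C e)) = Dom C e" "Cod C (Idt C (Dom C e)) = Dom C e" "e \<cdot> Idt C (Dom C e) = e"
    using ea by simp_all
  moreover have "\<exists>!v. v \<in> Con C \<and> Dom C v = Dom C e \<and> Cod C v = Dom C e \<and> e \<cdot> v = e"
    using EU[OF ce E(3,4)] by simp
  ultimately have uu: "u' \<cdot> u = Idt C (Dom C e)" using c1 c2 by blast
  have "Dom C u' = Cod C u" "Cod C u' = Dom C u" "u' \<cdot> u = Idt C (Dom C u)" using u(2,3) u'(2,3) uu by simp_all
  then have "split_mono_in C (Con C) u" unfolding split_mono_in_def
    using u(1) u'(1) by blast
  then have iu: "st u \<cdot> u = Idt C (Dom C u)" using part1 unfolding isometry_def by blast
  have ie'': "st e' \<cdot> e' = Idt C (Dom C e')" using ie' unfolding isometry_def by blast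
  have "st e \<cdot> e = st (e' \<cdot> u) \<cdot> (e' \<cdot> u)" by (simp only: u(4))
  also have "\<dots> = st u \<cdot> u" using reassoc[OF ie''] u(1-3) ea by simp
  finally show ?thesis unfolding isometry_def using iu u ea by simp
qed

lemma part2: "jointly_monic_in C (Con C) I Y g \<Longrightarrow> jointly_monic_in C (Arr C) I Y g"
proof -
  assume jm: "jointly_monic_in C (Con C) I Y g"
  have Y: "Y \<in> Ob C" and gI: "\<And>a. a \<in> I \<Longrightarrow> g a \<in> Con C \<and> Dom C (g a) = Y"
    and JM: "\<And>h1 h2. h1 \<in> Con C \<Longrightarrow> h2 \<in> Con C \<Longrightarrow> Cod C h1 = Y \<Longrightarrow> Cod C h2 = Y \<Longrightarrow> Dom C h1 = Dom C h2 \<Longrightarrow>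
        (\<forall>a \<in> I. g a \<cdot> h1 = g a \<cdot> h2) \<Longrightarrow> h1 = h2"
    using jm unfolding jointly_monic_in_def by auto
  have gA: "\<And>a. a \<in> I \<Longrightarrow> g a \<in> Arr C \<and> Dom C (g a) = Y" using gI contr_arr by (auto simp: Con_def)
  have "h1 = h2" if h: "h1 \<in> Arr C" "h2 \<in> Arr C" "Cod C h1 = Y" "Cod C h2 = Y" "Dom C h1 = Dom C h2"
      and hg: "\<forall>a \<in> I. g a \<cdot> h1 = g a \<cdot> h2" for h1 h2
  proof -
    define A where "A = Dom C h1"
    have hh: "h1 \<in> hom C A Y" "h2 \<in> hom C A Y" using h A_def by auto
    have Ao: "A \<in> Ob C" using h A_def by simp
    obtain P t1 p1 t2 p2 where oP: "orthonormal_biproduct C Y Y P t1 p1 t2 p2" using obip_ex[OF Y Y] by blast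
    note bP = obip_bip[OF oP] note BP = bip[OF bP]
    obtain hp where hp: "hp \<in> hom C A P" "p1 \<cdot> hp = h1" "p2 \<cdot> hp = h2" using prod_ex[OF BP(20) hh] by blast
    have hpa: "hp \<in> Arr C" "Dom C hp = A" "Cod C hp = P" using hp by auto
    obtain G o1 \<pi>1 o2 \<pi>2 where oG: "orthonormal_biproduct C A P G o1 \<pi>1 o2 \<pi>2" using obip_ex[OF Ao BP(15)] by blast
    note bG = obip_bip[OF oG] note BG = bip[OF bG]
    obtain Q e1 \<rho>1 e2 \<rho>2 q where oQ: "orthonormal_biproduct C P P Q e1 \<rho>1 e2 \<rho>2" and q: "q \<in> Arr C" "Dom C q = Q"
      and qd: "\<And>u. u \<in> Arr C \<Longrightarrow> Cod C u = Q \<Longrightarrow> (zero_arr C (q \<cdot> u) \<longleftrightarrow> \<rho>1 \<cdot> u = \<rho>2 \<cdot> u)"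
      using eqdet[OF BP(15)] by blast
    note bQ = obip_bip[OF oQ] note BQ = bip[OF bQ]
    have mm: "hp \<cdot> \<pi>1 \<in> hom C G P" "\<pi>2 \<in> hom C G P" using hpa BG by auto
    obtain m where m: "m \<in> hom C G Q" "\<rho>1 \<cdot> m = hp \<cdot> \<pi>1" "\<rho>2 \<cdot> m = \<pi>2" using prod_ex[OF BQ(20) mm] by blast
    have ma: "m \<in> Arr C" "Dom C m = G" "Cod C m = Q" using m by auto
    have pa: "q \<cdot> m \<in> Arr C" "Dom C (q \<cdot> m) = G" using ma q by auto
    obtain k where k: "kernel C (q \<cdot> m) k" and ik: "isometry C k" using PH_ker[OF pa(1)] by blast
    have ka: "k \<in> Arr C" "Cod C k = G" "zero_arr C ((q \<cdot> m) \<cdot> k)"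
      and kf: "\<And>h. h \<in> Arr C \<Longrightarrow> Cod C h = G \<Longrightarrow> zero_arr C ((q \<cdot> m) \<cdot> h) \<Longrightarrow>
          (\<exists>!u. u \<in> hom C (Dom C h) (Dom C k) \<and> k \<cdot> u = h)"
      using k pa unfolding kernel_def by auto
    have Ih: "Idt C A \<in> hom C A A" using Ao by simp
    obtain \<Gamma> where \<Gamma>: "\<Gamma> \<in> hom C A G" "\<pi>1 \<cdot> \<Gamma> = Idt C A" "\<pi>2 \<cdot> \<Gamma> = hp" using prod_ex[OF BG(20) Ih hp(1)] by blast
    have \<Gamma>a: "\<Gamma> \<in> Arr C" "Dom C \<Gamma> = A" "Cod C \<Gamma> = G" using \<Gamma> by auto
    have "\<rho>1 \<cdot> (m \<cdot> \<Gamma>) = \<rho>2 \<cdot> (m \<cdot> \<Gamma>)"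
      using reassoc[OF m(2)] reassoc[OF m(3)] \<Gamma> \<Gamma>a ma BQ BG hpa reassoc[OF \<Gamma>(2)] by simp
    then have "zero_arr C (q \<cdot> (m \<cdot> \<Gamma>))" using qd[of "m \<cdot> \<Gamma>"] \<Gamma>a ma by simp
    then have "zero_arr C ((q \<cdot> m) \<cdot> \<Gamma>)" using \<Gamma>a ma q by simp
    then obtain u where u: "u \<in> hom C A (Dom C k)" "k \<cdot> u = \<Gamma>" using kf[OF \<Gamma>a(1)] \<Gamma>a by auto
    have ua: "u \<in> Arr C" "Dom C u = A" "Cod C u = Dom C k" using u by auto
    have "zero_arr C (q \<cdot> (m \<cdot> k))" using ka ma q by simp
    then have "\<rho>1 \<cdot> (m \<cdot> k) = \<rho>2 \<cdot> (m \<cdot> k)" using qd[of "m \<cdot> k"] ka ma by simp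
    then have gr: "hp \<cdot> (\<pi>1 \<cdot> k) = \<pi>2 \<cdot> k" using reassoc[OF m(2)] reassoc[OF m(3)] ka ma BG hpa BQ by simp
    have ck: "contraction C k" using contr_iso[OF ik] .
    have cpi: "contraction C \<pi>1" "contraction C \<pi>2" using contr_proj[OF oG] by auto
    have cp: "contraction C p1" "contraction C p2" using contr_proj[OF oP] by auto
    have ck1: "contraction C (\<pi>1 \<cdot> k)" using contr_comp[OF ck cpi(1)] ka BG by simp
    have ck2: "contraction C (\<pi>2 \<cdot> k)" using contr_comp[OF ck cpi(2)] ka BG by simp
    have e1: "h1 \<cdot> (\<pi>1 \<cdot> k) = p1 \<cdot> (\<pi>2 \<cdot> k)"
      using reassoc[OF hp(2), of "\<pi>1 \<cdot> k"] gr ka BG hpa BP by simp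
    have e2: "h2 \<cdot> (\<pi>1 \<cdot> k) = p2 \<cdot> (\<pi>2 \<cdot> k)"
      using reassoc[OF hp(3), of "\<pi>1 \<cdot> k"] gr ka BG hpa BP by simp
    have c1: "h1 \<cdot> (\<pi>1 \<cdot> k) \<in> Con C" unfolding e1 using contr_comp[OF ck2 cp(1)] ka BG BP by (simp add: Con_def)
    have c2: "h2 \<cdot> (\<pi>1 \<cdot> k) \<in> Con C" unfolding e2 using contr_comp[OF ck2 cp(2)] ka BG BP by (simp add: Con_def)
    have k1a: "\<pi>1 \<cdot> k \<in> Arr C" "Cod C (\<pi>1 \<cdot> k) = A" using ka(1,2) BG(7,8,9) by simp_all
    have hA: "Dom C h1 = A" "Dom C h2 = A" using h(5) A_def by simp_all
    have "\<forall>a \<in> I. g a \<cdot> (h1 \<cdot> (\<pi>1 \<cdot> k)) = g a \<cdot> (h2 \<cdot> (\<pi>1 \<cdot> k))"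
    proof
      fix a assume a: "a \<in> I"
      have "g a \<cdot> (h1 \<cdot> (\<pi>1 \<cdot> k)) = (g a \<cdot> h1) \<cdot> (\<pi>1 \<cdot> k)" using gA[OF a] h(1-4) k1a hA by simp
      also have "\<dots> = (g a \<cdot> h2) \<cdot> (\<pi>1 \<cdot> k)" using hg a by simp
      also have "\<dots> = g a \<cdot> (h2 \<cdot> (\<pi>1 \<cdot> k))" using gA[OF a] h(1-4) k1a hA by simp
      finally show "g a \<cdot> (h1 \<cdot> (\<pi>1 \<cdot> k)) = g a \<cdot> (h2 \<cdot> (\<pi>1 \<cdot> k))" .
    qed
    moreover have "Cod C (h1 \<cdot> (\<pi>1 \<cdot> k)) = Y" "Cod C (h2 \<cdot> (\<pi>1 \<cdot> k)) = Y"
      "Dom C (h1 \<cdot> (\<pi>1 \<cdot> k)) = Dom C (h2 \<cdot> (\<pi>1 \<cdot> k))"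
      using h(1-4) k1a hA by simp_all
    ultimately have eqk: "h1 \<cdot> (\<pi>1 \<cdot> k) = h2 \<cdot> (\<pi>1 \<cdot> k)" using JM[OF c1 c2] by blast
    have "h1 = h1 \<cdot> (\<pi>1 \<cdot> \<Gamma>)" using \<Gamma>(2) h(1) hA by simp
    also have "\<dots> = h1 \<cdot> (\<pi>1 \<cdot> (k \<cdot> u))" by (simp only: u(2))
    also have "\<dots> = (h1 \<cdot> (\<pi>1 \<cdot> k)) \<cdot> u" using h(1) hA k1a ua ka(1,2) BG(7,8,9) by simp
    also have "\<dots> = (h2 \<cdot> (\<pi>1 \<cdot> k)) \<cdot> u" by (simp only: eqk)
    also have "\<dots> = h2 \<cdot> (\<pi>1 \<cdot> (k \<cdot> u))" using h(2) hA k1a ua ka(1,2) BG(7,8,9) by simp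
    also have "\<dots> = h2 \<cdot> (\<pi>1 \<cdot> \<Gamma>)" by (simp only: u(2))
    also have "\<dots> = h2" using \<Gamma>(2) h(2) hA by simp
    finally show ?thesis .
  qed
  then show ?thesis unfolding jointly_monic_in_def using Y gA by auto
qed

end

theorem proposition7p4:
  fixes C :: "('o, 'm) starcat"
  assumes "pre_hilbert C"
  shows
    "(\<forall>f. split_mono_in C (Con C) f \<longrightarrow> isometry C f) \<and>
     (\<forall>(I :: 'i set) Y g. jointly_monic_in C (Con C) I Y g \<longrightarrow> jointly_monic_in C (Arr C) I Y g) \<and>
     (\<forall>f g e. f \<in> Con C \<and> g \<in> Con C \<and> equaliser_in C (Arr C) f g e \<and> isometry C e
        \<longrightarrow> e \<in> Con C \<and> equaliser_in C (Con C) f g e) \<and>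
     (\<forall>f g. f \<in> Con C \<and> g \<in> Con C \<and> Dom C f = Dom C g \<and> Cod C f = Cod C g
        \<longrightarrow> (\<exists>e. isometry C e \<and> equaliser_in C (Con C) f g e)) \<and>
     (\<forall>f g e. equaliser_in C (Con C) f g e \<longrightarrow> isometry C e)"
proof -
  interpret ph C by (rule ph.intro) (rule assms)
  show ?thesis using part1 part2 part3a part3b part4 by blast
qed

end
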